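(* Let $\mathcal F=\{f_0,f_1,\ldots\}$ be a (countable) family of bounded arithmetic functions with $\mathrm{AE}(\mathcal F)<+\infty$. Then for every $\epsilon>0$ there exists $\delta>0$ such that for every family $\mathcal G=\{g_0,g_1,\ldots\}\subseteq l^\infty(\mathbb N)$ (indexed by the same index set) with $\sup_{i}\|g_i-f_i\|_{l^\infty}<\delta$, one has $\mathrm{AE}(\mathcal G)>\mathrm{AE}(\mathcal F)-\epsilon$.
   Context: $\mathbb N=\{0,1,2,\ldots\}$ and $l^\infty(\mathbb N)$ is the C*-algebra of bounded complex-valued functions on $\mathbb N$ with the sup norm. Let $\sigma_A:l^\infty(\mathbb N)\to l^\infty(\mathbb N)$ be $(\sigma_Af)(n)=f(n+1)$. An anqie is a unital C*-subalgebra $\mathcal A\subseteq l^\infty(\mathbb N)$ with $\sigma_A(\mathcal A)\subseteq\mathcal A$. For $\mathcal F\subseteq l^\infty(\mathbb N)$, $\mathcal A_{\mathcal F}$ denotes the smallest anqie containing $\mathcal F$. For an anqie $\mathcal A$ with maximal ideal space $X$ (weak* topology), the map $A:X\to X$, $(A\rho)(f)=\rho(\sigma_Af)$, is continuous; the anqie entropy $\mathrm{AE}(\mathcal A)\in[0,\infty]$ is the topological entropy $h(A)$, and $\mathrm{AE}(\mathcal F)=\mathrm{AE}(\mathcal A_{\mathcal F})$. *)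

theory Defs
  imports "HOL-Analysis.Analysis"
begin

type_synonym arith = "nat \<Rightarrow> complex"

definition linf :: "arith set" where
  "linf = {f. bounded (range f)}"

definition supnorm :: "arith \<Rightarrow> real" where
  "supnorm f = Sup (range (\<lambda>n. cmod (f n)))"

definition shiftA :: "arith \<Rightarrow> arith" where
  "shiftA f = (\<lambda>n. f (Suc n))"

text \<open>Anqie: unital C*-subalgebra of l-infinity(N) invariant under the shift.\<close>
definition anqie :: "arith set \<Rightarrow> bool" where
  "anqie A \<longleftrightarrow> A \<subseteq> linf
     \<and> (\<lambda>n. 1) \<in> A
     \<and> (\<forall>f\<in>A. \<forall>g\<in>A. (\<lambda>n. f n + g n) \<in> A)
     \<and> (\<forall>f\<in>A. \<forall>g\<in>A. (\<lambda>n. f n * g n) \<in> A)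
     \<and> (\<forall>c. \<forall>f\<in>A. (\<lambda>n. c * f n) \<in> A)
     \<and> (\<forall>f\<in>A. (\<lambda>n. cnj (f n)) \<in> A)
     \<and> (\<forall>s f. (\<forall>k. s k \<in> A) \<and> f \<in> linf
              \<and> (\<lambda>k. supnorm (\<lambda>n. s k n - f n)) \<longlonglongrightarrow> 0 \<longrightarrow> f \<in> A)
     \<and> (\<forall>f\<in>A. shiftA f \<in> A)"

definition anqie_gen :: "arith set \<Rightarrow> arith set" where
  "anqie_gen F = \<Inter> {A. anqie A \<and> F \<subseteq> A}"

text \<open>Maximal ideal space: nonzero multiplicative linear functionals on A
  (characters), represented as functions vanishing off A.\<close>
definition chars :: "arith set \<Rightarrow> (arith \<Rightarrow> complex) set" where
  "chars A = {\<rho>. (\<forall>f\<in>A. \<forall>g\<in>A. \<rho> (\<lambda>n. f n + g n) = \<rho> f + \<rho> g)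
                \<and> (\<forall>f\<in>A. \<forall>g\<in>A. \<rho> (\<lambda>n. f n * g n) = \<rho> f * \<rho> g)
                \<and> (\<forall>c. \<forall>f\<in>A. \<rho> (\<lambda>n. c * f n) = c * \<rho> f)
                \<and> \<rho> (\<lambda>n. 1) = 1
                \<and> (\<forall>f. f \<notin> A \<longrightarrow> \<rho> f = 0)}"

text \<open>Weak* topology: the topology of pointwise convergence, i.e. the
  subspace of the product topology (coordinates outside A are constantly 0).\<close>
definition max_ideal_space :: "arith set \<Rightarrow> (arith \<Rightarrow> complex) topology" where
  "max_ideal_space A = subtopology euclidean (chars A)"

definition dual_shift :: "arith set \<Rightarrow> (arith \<Rightarrow> complex) \<Rightarrow> (arith \<Rightarrow> complex)" where
  "dual_shift A \<rho> = (\<lambda>f. if f \<in> A then \<rho> (shiftA f) else 0)"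

definition cover_num :: "'a topology \<Rightarrow> 'a set set \<Rightarrow> nat" where
  "cover_num X \<U> = Inf {card \<V> | \<V>. \<V> \<subseteq> \<U> \<and> finite \<V> \<and> \<Union>\<V> = topspace X}"

definition join_cover :: "'a topology \<Rightarrow> ('a \<Rightarrow> 'a) \<Rightarrow> 'a set set \<Rightarrow> nat \<Rightarrow> 'a set set" where
  "join_cover X T \<U> n =
     {topspace X \<inter> (\<Inter>i<n. (T ^^ i) -` U i) | U. \<forall>i<n. U i \<in> \<U>}"

definition open_covers :: "'a topology \<Rightarrow> 'a set set set" where
  "open_covers X = {\<U>. (\<forall>U\<in>\<U>. openin X U) \<and> \<Union>\<U> = topspace X}"

definition cover_entropy :: "'a topology \<Rightarrow> ('a \<Rightarrow> 'a) \<Rightarrow> 'a set set \<Rightarrow> real" where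
  "cover_entropy X T \<U> =
     lim (\<lambda>n. ln (real (cover_num X (join_cover X T \<U> n))) / real n)"

definition top_entropy :: "'a topology \<Rightarrow> ('a \<Rightarrow> 'a) \<Rightarrow> ereal" where
  "top_entropy X T = (SUP \<U>\<in>open_covers X. ereal (cover_entropy X T \<U>))"

definition anqie_entropy :: "arith set \<Rightarrow> ereal" where
  "anqie_entropy F = top_entropy (max_ideal_space (anqie_gen F)) (dual_shift (anqie_gen F))"

end

theory Submission
  imports Defs
begin


lemma linf_iff: "f \<in> linf \<longleftrightarrow> (\<exists>B. \<forall>n. cmod (f n) \<le> B)"
  unfolding linf_def bounded_iff by auto

lemma supnorm_ge: "f \<in> linf \<Longrightarrow> cmod (f n) \<le> supnorm f"
  unfolding supnorm_def linf_iff
  by (rule cSup_upper) (auto simp: bdd_above_def)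

lemma supnorm_le: "(\<And>n. cmod (f n) \<le> B) \<Longrightarrow> supnorm f \<le> B"
  unfolding supnorm_def by (rule cSup_least) auto

lemma supnorm_nonneg: "f \<in> linf \<Longrightarrow> 0 \<le> supnorm f"
  using supnorm_ge[of f 0] norm_ge_zero order_trans by blast

lemma linf_anqie: "anqie linf"
proof -
  have add: "(\<lambda>n. f n + g n) \<in> linf" if "f \<in> linf" "g \<in> linf" for f g
  proof -
    from that obtain B C where "\<forall>n. cmod (f n) \<le> B" "\<forall>n. cmod (g n) \<le> C" by (auto simp: linf_iff)
    then have "\<forall>n. cmod (f n + g n) \<le> B + C" by (meson add_mono norm_triangle_ineq order_trans)
    then show ?thesis by (auto simp: linf_iff)
  qed
  have mul: "(\<lambda>n. f n * g n) \<in> linf" if "f \<in> linf" "g \<in> linf" for f g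
  proof -
    from that obtain B C where B: "\<forall>n. cmod (f n) \<le> B" and C: "\<forall>n. cmod (g n) \<le> C" by (auto simp: linf_iff)
    have "\<forall>n. cmod (f n * g n) \<le> B * C"
      using B C by (simp add: norm_mult mult_mono' )
    then show ?thesis by (auto simp: linf_iff)
  qed
  have sc: "(\<lambda>n. c * f n) \<in> linf" if "f \<in> linf" for f c
    using mul[of "\<lambda>n. c" f] that by (auto simp: linf_iff)
  have cj: "(\<lambda>n. cnj (f n)) \<in> linf" if "f \<in> linf" for f
    using that by (auto simp: linf_iff)
  have sh: "shiftA f \<in> linf" if "f \<in> linf" for f
    using that by (auto simp: linf_iff shiftA_def)
  show ?thesis unfolding anqie_def using add mul sc cj sh by (auto simp: linf_iff)
qed

lemma anqie_Inter:
  assumes "\<And>A. A \<in> S \<Longrightarrow> anqie A" "S \<noteq> {}"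
  shows "anqie (\<Inter>S)"
proof -
  have a: "\<And>A. A \<in> S \<Longrightarrow> A \<subseteq> linf \<and> (\<lambda>n. 1) \<in> A
     \<and> (\<forall>f\<in>A. \<forall>g\<in>A. (\<lambda>n. f n + g n) \<in> A)
     \<and> (\<forall>f\<in>A. \<forall>g\<in>A. (\<lambda>n. f n * g n) \<in> A)
     \<and> (\<forall>c. \<forall>f\<in>A. (\<lambda>n. c * f n) \<in> A)
     \<and> (\<forall>f\<in>A. (\<lambda>n. cnj (f n)) \<in> A)
     \<and> (\<forall>s f. (\<forall>k. s k \<in> A) \<and> f \<in> linf
              \<and> (\<lambda>k. supnorm (\<lambda>n. s k n - f n)) \<longlonglongrightarrow> 0 \<longrightarrow> f \<in> A)
     \<and> (\<forall>f\<in>A. shiftA f \<in> A)"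
    using assms(1) unfolding anqie_def by blast
  show ?thesis unfolding anqie_def
  proof (intro conjI)
    show "\<Inter>S \<subseteq> linf" using a assms(2) by blast
    show "(\<lambda>n. 1) \<in> \<Inter>S" using a by blast
    show "\<forall>f\<in>\<Inter>S. \<forall>g\<in>\<Inter>S. (\<lambda>n. f n + g n) \<in> \<Inter>S"
    proof (intro ballI InterI)
      fix f g A assume "f \<in> \<Inter>S" "g \<in> \<Inter>S" "A \<in> S"
      then have "f \<in> A" "g \<in> A" "\<forall>f\<in>A. \<forall>g\<in>A. (\<lambda>n. f n + g n) \<in> A" using a by auto
      then show "(\<lambda>n. f n + g n) \<in> A" by blast
    qed
    show "\<forall>f\<in>\<Inter>S. \<forall>g\<in>\<Inter>S. (\<lambda>n. f n * g n) \<in> \<Inter>S"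
    proof (intro ballI InterI)
      fix f g A assume "f \<in> \<Inter>S" "g \<in> \<Inter>S" "A \<in> S"
      then have "f \<in> A" "g \<in> A" "\<forall>f\<in>A. \<forall>g\<in>A. (\<lambda>n. f n * g n) \<in> A" using a by auto
      then show "(\<lambda>n. f n * g n) \<in> A" by blast
    qed
    show "\<forall>c. \<forall>f\<in>\<Inter>S. (\<lambda>n. c * f n) \<in> \<Inter>S"
    proof (intro allI ballI InterI)
      fix c f A assume "f \<in> \<Inter>S" "A \<in> S"
      then have "f \<in> A" "\<forall>c. \<forall>f\<in>A. (\<lambda>n. c * f n) \<in> A" using a by auto
      then show "(\<lambda>n. c * f n) \<in> A" by blast
    qed
    show "\<forall>f\<in>\<Inter>S. (\<lambda>n. cnj (f n)) \<in> \<Inter>S"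
    proof (intro ballI InterI)
      fix f A assume "f \<in> \<Inter>S" "A \<in> S"
      then have "f \<in> A" "\<forall>f\<in>A. (\<lambda>n. cnj (f n)) \<in> A" using a by auto
      then show "(\<lambda>n. cnj (f n)) \<in> A" by blast
    qed
    show "\<forall>f\<in>\<Inter>S. shiftA f \<in> \<Inter>S"
    proof (intro ballI InterI)
      fix f A assume "f \<in> \<Inter>S" "A \<in> S"
      then have "f \<in> A" "\<forall>f\<in>A. shiftA f \<in> A" using a by auto
      then show "shiftA f \<in> A" by blast
    qed
    show "\<forall>s f. (\<forall>k. s k \<in> \<Inter>S) \<and> f \<in> linf
              \<and> (\<lambda>k. supnorm (\<lambda>n. s k n - f n)) \<longlonglongrightarrow> 0 \<longrightarrow> f \<in> \<Inter>S"
    proof (intro allI impI InterI)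
      fix s f A assume h: "(\<forall>k. s k \<in> \<Inter>S) \<and> f \<in> linf
              \<and> (\<lambda>k. supnorm (\<lambda>n. s k n - f n)) \<longlonglongrightarrow> 0" and A: "A \<in> S"
      then have "\<forall>k. s k \<in> A" by blast
      with h a[OF A] show "f \<in> A" by blast
    qed
  qed
qed

lemma anqie_gen_anqie: "F \<subseteq> linf \<Longrightarrow> anqie (anqie_gen F)"
  unfolding anqie_gen_def using linf_anqie by (intro anqie_Inter) auto

lemma anqie_gen_sub: "F \<subseteq> anqie_gen F"
  unfolding anqie_gen_def by auto

lemma anqie_gen_least: "anqie E \<Longrightarrow> F \<subseteq> E \<Longrightarrow> anqie_gen F \<subseteq> E"
  unfolding anqie_gen_def by auto



context fixes A assumes anq: "anqie A" begin

lemma A_linf: "f \<in> A \<Longrightarrow> f \<in> linf" using anq unfolding anqie_def by blast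
lemma A_one: "(\<lambda>n. 1) \<in> A" using anq unfolding anqie_def by blast
lemma A_add: "f \<in> A \<Longrightarrow> g \<in> A \<Longrightarrow> (\<lambda>n. f n + g n) \<in> A" using anq unfolding anqie_def by blast
lemma A_mult: "f \<in> A \<Longrightarrow> g \<in> A \<Longrightarrow> (\<lambda>n. f n * g n) \<in> A" using anq unfolding anqie_def by blast
lemma A_scal: "f \<in> A \<Longrightarrow> (\<lambda>n. c * f n) \<in> A" using anq unfolding anqie_def by blast
lemma A_cnj: "f \<in> A \<Longrightarrow> (\<lambda>n. cnj (f n)) \<in> A" using anq unfolding anqie_def by blast
lemma A_shift: "f \<in> A \<Longrightarrow> shiftA f \<in> A" using anq unfolding anqie_def by blast
lemma A_lim: "(\<And>k. s k \<in> A) \<Longrightarrow> f \<in> linf \<Longrightarrow> (\<lambda>k. supnorm (\<lambda>n. s k n - f n)) \<longlonglongrightarrow> 0 \<Longrightarrow> f \<in> A"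
  using anq unfolding anqie_def by blast

lemma A_const: "(\<lambda>n. c) \<in> A" using A_scal[OF A_one, of c] by simp
lemma A_diff: "f \<in> A \<Longrightarrow> g \<in> A \<Longrightarrow> (\<lambda>n. f n - g n) \<in> A"
  using A_add[OF _ A_scal[of g "-1"], of f] by simp
lemma A_power: "f \<in> A \<Longrightarrow> (\<lambda>n. f n ^ k) \<in> A"
  by (induction k) (auto simp: A_one A_mult)
lemma A_sum: "finite I \<Longrightarrow> (\<And>x. x \<in> I \<Longrightarrow> h x \<in> A) \<Longrightarrow> (\<lambda>n. \<Sum>x\<in>I. h x n) \<in> A"
  by (induction I rule: finite_induct) (auto simp: A_const A_add)
lemma A_shiftpow: "f \<in> A \<Longrightarrow> (shiftA ^^ m) f \<in> A"
  by (induction m) (auto simp: A_shift)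

end

lemma shiftpow_apply: "(shiftA ^^ m) f n = f (n + m)"
  by (induction m arbitrary: n) (auto simp: shiftA_def)

lemma shiftpow_eq: "(shiftA ^^ m) f = (\<lambda>n. f (n + m))"
  using shiftpow_apply by blast

context fixes A \<rho> assumes ch: "\<rho> \<in> chars A" begin

lemma ch_add: "f \<in> A \<Longrightarrow> g \<in> A \<Longrightarrow> \<rho> (\<lambda>n. f n + g n) = \<rho> f + \<rho> g" using ch unfolding chars_def by blast
lemma ch_mult: "f \<in> A \<Longrightarrow> g \<in> A \<Longrightarrow> \<rho> (\<lambda>n. f n * g n) = \<rho> f * \<rho> g" using ch unfolding chars_def by blast
lemma ch_scal: "f \<in> A \<Longrightarrow> \<rho> (\<lambda>n. c * f n) = c * \<rho> f" using ch unfolding chars_def by blast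
lemma ch_one: "\<rho> (\<lambda>n. 1) = 1" using ch unfolding chars_def by blast
lemma ch_out: "f \<notin> A \<Longrightarrow> \<rho> f = 0" using ch unfolding chars_def by blast

lemma ch_const: "anqie A \<Longrightarrow> \<rho> (\<lambda>n. c) = c"
  using ch_scal[OF A_one, of c] ch_one by simp
lemma ch_diff: "anqie A \<Longrightarrow> f \<in> A \<Longrightarrow> g \<in> A \<Longrightarrow> \<rho> (\<lambda>n. f n - g n) = \<rho> f - \<rho> g"
  using ch_add[OF _ A_scal[of A g "-1"], of f] ch_scal[of g "-1"] by simp
lemma ch_sum: assumes anq: "anqie A" shows "finite I \<Longrightarrow> (\<And>x. x \<in> I \<Longrightarrow> h x \<in> A) \<Longrightarrow> \<rho> (\<lambda>n. \<Sum>x\<in>I. h x n) = (\<Sum>x\<in>I. \<rho> (h x))"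
proof (induction I rule: finite_induct)
  case empty then show ?case using ch_const[OF anq, of 0] by simp
next
  case (insert x F)
  have "\<rho> (\<lambda>n. \<Sum>x\<in>insert x F. h x n) = \<rho> (\<lambda>n. h x n + (\<Sum>x\<in>F. h x n))"
    using insert by simp
  also have "\<dots> = \<rho> (h x) + \<rho> (\<lambda>n. \<Sum>x\<in>F. h x n)"
    using ch_add[of "h x" "\<lambda>n. \<Sum>x\<in>F. h x n"] insert A_sum[OF anq, of F h] A_sum by auto
  finally show ?case using insert by simp
qed

end



lemma supnorm_to_zero:
  assumes "\<And>k n. cmod (h k n) \<le> e k" "e \<longlonglongrightarrow> 0"
  shows "(\<lambda>k. supnorm (h k)) \<longlonglongrightarrow> 0"
proof (rule Lim_null_comparison[OF _ assms(2)])
  have "\<bar>supnorm (h k)\<bar> \<le> e k" for k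
  proof -
    have b: "\<forall>n. cmod (h k n) \<le> e k" using assms(1) by blast
    then have "h k \<in> linf" by (auto simp: linf_iff)
    then have "0 \<le> supnorm (h k)" by (rule supnorm_nonneg)
    moreover have "supnorm (h k) \<le> e k" using b supnorm_le by blast
    ultimately show ?thesis by simp
  qed
  then show "\<forall>\<^sub>F k in sequentially. norm (supnorm (h k)) \<le> e k" by simp
qed

lemma char_nonvanish:
  assumes anq: "anqie A" and ch: "\<rho> \<in> chars A" and a: "a \<in> A" and eta: "0 < \<eta>"
    and low: "\<And>n. \<eta> \<le> cmod (a n)"
  shows "\<rho> a \<noteq> 0"
proof -
  obtain B where B: "\<And>n. cmod (a n) \<le> B" using A_linf[OF anq a] by (auto simp: linf_iff)
  define M where "M = B^2 + 1"
  define \<beta> where "\<beta> n = (cmod (a n))^2" for n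
  have Mpos: "0 < M" unfolding M_def by (smt (verit) zero_le_power2)
  have \<beta>le: "\<beta> n \<le> B^2" for n unfolding \<beta>_def using B[of n] by (simp add: power_mono)
  have \<beta>ge: "\<eta>^2 \<le> \<beta> n" for n unfolding \<beta>_def using low[of n] eta by (simp add: power_mono)
  have \<beta>pos: "0 < \<beta> n" for n using \<beta>ge[of n] eta by (meson less_le_trans zero_less_power)
  define r where "r = 1 - \<eta>^2 / M"
  define d where "d n = 1 - \<beta> n / M" for n
  have d0: "0 \<le> d n" for n unfolding d_def using \<beta>le[of n] Mpos by (simp add: M_def field_simps)
  have dr: "d n \<le> r" for n unfolding d_def r_def using \<beta>ge[of n] Mpos by (simp add: divide_right_mono)
  have r0: "0 \<le> r" using d0[of 0] dr[of 0] by simp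
  have r1: "r < 1" unfolding r_def using eta Mpos by simp
  define b where "b = (\<lambda>n. a n * cnj (a n))"
  have bA: "b \<in> A" unfolding b_def by (intro A_mult[OF anq] A_cnj[OF anq] a)
  have b\<beta>: "b n = complex_of_real (\<beta> n)" for n
    unfolding b_def \<beta>_def by (rule complex_norm_square[symmetric])
  define c where "c N = (\<lambda>n. complex_of_real (1/M) * (\<Sum>k<N. (\<lambda>n. (\<lambda>n. 1) n - (\<lambda>n. complex_of_real (1/M) * b n) n) n ^ k))" for N
  have cA: "c N \<in> A" for N
    unfolding c_def
    by (intro A_scal[OF anq] A_sum[OF anq] A_power[OF anq] A_diff[OF anq] A_one[OF anq] bA) simp
  define u where "u = (\<lambda>n. complex_of_real (1 / \<beta> n))"
  have cval: "c N n = complex_of_real ((1 - d n ^ N) / \<beta> n)" for N n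
  proof -
    have eq: "(\<lambda>n. 1) n - complex_of_real (1/M) * b n = complex_of_real (d n)"
      unfolding d_def b\<beta> by simp
    have "d n \<noteq> 1" unfolding d_def using \<beta>pos[of n] Mpos by simp
    then have "(\<Sum>k<N. d n ^ k) = (1 - d n ^ N) / (1 - d n)" by (simp add: sum_gp_strict)
    moreover have "1 - d n = \<beta> n / M" unfolding d_def by simp
    ultimately have ss: "(\<Sum>k<N. d n ^ k) = (1 - d n ^ N) / (\<beta> n / M)" by simp
    have h1: "(1/M) * (\<Sum>k<N. d n ^ k) = (1 - d n ^ N) / \<beta> n"
      using Mpos \<beta>pos[of n] ss by simp
    have "c N n = complex_of_real (1/M) * (\<Sum>k<N. complex_of_real (d n) ^ k)"
      unfolding c_def eq by simp
    also have "\<dots> = complex_of_real ((1/M) * (\<Sum>k<N. d n ^ k))"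
      by simp
    finally show ?thesis by (simp only: h1)
  qed
  have est: "cmod (c N n - u n) \<le> r ^ N / \<eta>^2" for N n
  proof -
    have "c N n - u n = complex_of_real (- (d n ^ N / \<beta> n))"
      unfolding cval u_def using \<beta>pos[of n] by (simp add: field_simps)
    then have "cmod (c N n - u n) = d n ^ N / \<beta> n"
      using d0[of n] \<beta>pos[of n] by (simp add: norm_divide norm_power)
    also have "\<dots> \<le> r ^ N / \<beta> n"
      using d0[of n] dr[of n] \<beta>pos[of n] by (simp add: divide_right_mono power_mono)
    also have "\<dots> \<le> r ^ N / \<eta>^2"
      using \<beta>ge[of n] eta r0 by (simp add: frac_le)
    finally show ?thesis .
  qed
  have lim: "(\<lambda>N. r ^ N / \<eta>^2) \<longlonglongrightarrow> 0"
    using LIMSEQ_realpow_zero[OF r0 r1] by (simp add: tendsto_divide_zero)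
  have uL: "u \<in> linf"
  proof -
    have "cmod (u n) \<le> 1 / \<eta>^2" for n
    proof -
      have "cmod (u n) = 1 / \<beta> n" unfolding u_def using \<beta>pos[of n] by (simp add: norm_divide)
      also have "\<dots> \<le> 1 / \<eta>^2"
        using divide_left_mono[of "\<eta>^2" "\<beta> n" 1] \<beta>ge[of n] \<beta>pos[of n] eta by simp
      finally show ?thesis .
    qed
    then show ?thesis by (auto simp: linf_iff)
  qed
  have uA: "u \<in> A"
    by (rule A_lim[OF anq cA uL supnorm_to_zero[OF est lim]])
  have "(\<lambda>n. b n * u n) = (\<lambda>n. 1)"
    unfolding u_def b\<beta> using \<beta>pos by (auto simp flip: of_real_mult intro!: ext) (metis less_irrefl)
  then have "\<rho> b * \<rho> u = 1" using ch_mult[OF ch bA uA] ch_one[OF ch] by simp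
  moreover have "\<rho> b = \<rho> a * \<rho> (\<lambda>n. cnj (a n))"
    unfolding b_def by (rule ch_mult[OF ch a A_cnj[OF anq a]])
  ultimately show ?thesis by auto
qed

lemma char_bound:
  assumes anq: "anqie A" and ch: "\<rho> \<in> chars A" and a: "a \<in> A"
  shows "cmod (\<rho> a) \<le> supnorm a"
proof (rule ccontr)
  assume "\<not> ?thesis"
  then have gt: "supnorm a < cmod (\<rho> a)" by simp
  define a' where "a' = (\<lambda>n. a n - (\<lambda>n. \<rho> a) n)"
  have a'A: "a' \<in> A" unfolding a'_def by (intro A_diff[OF anq a A_const[OF anq]])
  have "cmod (\<rho> a) - supnorm a \<le> cmod (a' n)" for n
  proof -
    have "cmod (a n) \<le> supnorm a" using supnorm_ge[OF A_linf[OF anq a]] .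
    moreover have "cmod (\<rho> a) \<le> cmod (a n) + cmod (a' n)"
      unfolding a'_def by (metis add.commute diff_add_cancel norm_minus_commute norm_triangle_ineq4 add_le_cancel_right  norm_triangle_ineq2 ) 
    ultimately show ?thesis by simp
  qed
  then have "\<rho> a' \<noteq> 0"
    by (intro char_nonvanish[OF anq ch a'A, of "cmod (\<rho> a) - supnorm a"]) (use gt in auto)
  moreover have "\<rho> a' = 0"
    unfolding a'_def using ch_diff[OF ch anq a A_const[OF anq]] ch_const[OF ch anq] by simp
  ultimately show False by simp
qed

lemma char_real:
  assumes anq: "anqie A" and ch: "\<rho> \<in> chars A" and a: "a \<in> A" and re: "\<And>n. Im (a n) = 0"
  shows "Im (\<rho> a) = 0"
proof (rule ccontr)
  assume ne: "Im (\<rho> a) \<noteq> 0"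
  define a' where "a' = (\<lambda>n. a n - (\<lambda>n. \<rho> a) n)"
  have a'A: "a' \<in> A" unfolding a'_def by (intro A_diff[OF anq a A_const[OF anq]])
  have "\<bar>Im (\<rho> a)\<bar> \<le> cmod (a' n)" for n
  proof -
    have "\<bar>Im (a' n)\<bar> \<le> cmod (a' n)" by (rule abs_Im_le_cmod)
    moreover have "Im (a' n) = - Im (\<rho> a)" unfolding a'_def using re[of n] by simp
    ultimately show ?thesis by simp
  qed
  then have "\<rho> a' \<noteq> 0"
    by (intro char_nonvanish[OF anq ch a'A, of "\<bar>Im (\<rho> a)\<bar>"]) (use ne in auto)
  moreover have "\<rho> a' = 0"
    unfolding a'_def using ch_diff[OF ch anq a A_const[OF anq]] ch_const[OF ch anq] by simp
  ultimately show False by simp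
qed

lemma char_cnj:
  assumes anq: "anqie A" and ch: "\<rho> \<in> chars A" and a: "a \<in> A"
  shows "\<rho> (\<lambda>n. cnj (a n)) = cnj (\<rho> a)"
proof -
  have ca: "(\<lambda>n. cnj (a n)) \<in> A" by (rule A_cnj[OF anq a])
  have s: "(\<lambda>n. a n + cnj (a n)) \<in> A" by (rule A_add[OF anq a ca])
  have d: "(\<lambda>n. \<i> * (\<lambda>n. a n - cnj (a n)) n) \<in> A" by (rule A_scal[OF anq A_diff[OF anq a ca]])
  have 1: "Im (\<rho> a + \<rho> (\<lambda>n. cnj (a n))) = 0"
    using char_real[OF anq ch s] ch_add[OF ch a ca] by simp
  have 2: "Im (\<i> * (\<rho> a - \<rho> (\<lambda>n. cnj (a n)))) = 0"
    using char_real[OF anq ch d] ch_scal[OF ch A_diff[OF anq a ca]] ch_diff[OF ch anq a ca] by simp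
  show ?thesis using 1 2 by (simp add: complex_eq_iff)
qed

lemma char_density:
  assumes anq: "anqie A" and ch: "\<rho> \<in> chars A" and fin: "finite I"
    and hA: "\<And>x. x \<in> I \<Longrightarrow> h x \<in> A" and eta: "0 < \<eta>"
  shows "\<exists>k. \<forall>x\<in>I. cmod (h x k - \<rho> (h x)) < \<eta>"
proof (rule ccontr)
  assume "\<not> ?thesis"
  then have far: "\<And>k. \<exists>x\<in>I. \<eta> \<le> cmod (h x k - \<rho> (h x))" by (auto simp: not_less)
  define e where "e x = (\<lambda>n. h x n - (\<lambda>n. \<rho> (h x)) n)" for x
  have eA: "x \<in> I \<Longrightarrow> e x \<in> A" for x unfolding e_def by (intro A_diff[OF anq hA A_const[OF anq]])
  define p where "p x = (\<lambda>n. e x n * cnj (e x n))" for x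
  have pA: "x \<in> I \<Longrightarrow> p x \<in> A" for x unfolding p_def by (intro A_mult[OF anq] A_cnj[OF anq] eA)
  define b where "b = (\<lambda>n. \<Sum>x\<in>I. p x n)"
  have bA: "b \<in> A" unfolding b_def by (rule A_sum[OF anq fin pA])
  have "\<eta>^2 \<le> cmod (b n)" for n
  proof -
    obtain x where x: "x \<in> I" "\<eta> \<le> cmod (h x n - \<rho> (h x))" using far by blast
    have pv: "p y n = complex_of_real ((cmod (e y n))^2)" for y unfolding p_def by (rule complex_norm_square[symmetric])
    have "b n = complex_of_real (\<Sum>y\<in>I. (cmod (e y n))^2)" unfolding b_def pv by simp
    then have "cmod (b n) = (\<Sum>y\<in>I. (cmod (e y n))^2)"
      by (metis (no_types, lifting) abs_of_nonneg norm_of_real sum_nonneg zero_le_power2)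
    moreover have "(cmod (e x n))^2 \<le> (\<Sum>y\<in>I. (cmod (e y n))^2)"
      using x(1) fin by (intro member_le_sum) auto
    moreover have "\<eta>^2 \<le> (cmod (e x n))^2" unfolding e_def using x(2) eta by (simp add: power_mono)
    ultimately show ?thesis by simp
  qed
  then have "\<rho> b \<noteq> 0" by (intro char_nonvanish[OF anq ch bA, of "\<eta>^2"]) (use eta in auto)
  moreover have "\<rho> b = 0"
  proof -
    have "\<rho> (e x) = 0" if "x \<in> I" for x
      unfolding e_def using ch_diff[OF ch anq hA[OF that] A_const[OF anq]] ch_const[OF ch anq] by simp
    then have "\<rho> (p x) = 0" if "x \<in> I" for x
      unfolding p_def using that ch_mult[OF ch eA[OF that] A_cnj[OF anq eA[OF that]]] by simp
    then show ?thesis unfolding b_def using ch_sum[OF ch anq fin pA] by simp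
  qed
  ultimately show False by simp
qed



definition ev :: "arith set \<Rightarrow> nat \<Rightarrow> (arith \<Rightarrow> complex)" where
  "ev A k = (\<lambda>a. if a \<in> A then a k else 0)"

lemma ev_chars: "anqie A \<Longrightarrow> ev A k \<in> chars A"
  unfolding chars_def ev_def
  by (auto simp: A_add A_mult A_scal A_one)

lemma shiftA_add: "shiftA (\<lambda>n. f n + g n) = (\<lambda>n. shiftA f n + shiftA g n)" by (simp add: shiftA_def)
lemma shiftA_mult: "shiftA (\<lambda>n. f n * g n) = (\<lambda>n. shiftA f n * shiftA g n)" by (simp add: shiftA_def)
lemma shiftA_scal: "shiftA (\<lambda>n. c * f n) = (\<lambda>n. c * shiftA f n)" by (simp add: shiftA_def)
lemma shiftA_one: "shiftA (\<lambda>n. c) = (\<lambda>n. c)" by (simp add: shiftA_def)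

lemma dual_shift_chars:
  assumes anq: "anqie A" and ch: "\<rho> \<in> chars A"
  shows "dual_shift A \<rho> \<in> chars A"
  unfolding chars_def dual_shift_def
  using ch anq
  by (auto simp: A_add A_mult A_scal A_one A_shift shiftA_add shiftA_mult shiftA_scal shiftA_one
      ch_add ch_mult ch_scal ch_one)

lemma dual_shift_pow_chars:
  "anqie A \<Longrightarrow> \<rho> \<in> chars A \<Longrightarrow> (dual_shift A ^^ t) \<rho> \<in> chars A"
  by (induction t) (auto simp: dual_shift_chars)

lemma dual_shift_pow:
  assumes anq: "anqie A"
  shows "a \<in> A \<Longrightarrow> (dual_shift A ^^ t) \<rho> a = \<rho> ((shiftA ^^ t) a)"
proof (induction t arbitrary: a)
  case 0 then show ?case by simp
next
  case (Suc t)
  have "(dual_shift A ^^ Suc t) \<rho> a = (dual_shift A ^^ t) \<rho> (shiftA a)"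
    using Suc.prems by (simp add: dual_shift_def)
  also have "\<dots> = \<rho> ((shiftA ^^ t) (shiftA a))" using Suc A_shift[OF anq] by blast
  also have "\<dots> = \<rho> ((shiftA ^^ Suc t) a)" by (simp add: funpow_Suc_right del: funpow.simps)
  finally show ?case .
qed

lemma dual_shift_pow_ev:
  assumes anq: "anqie A" and a: "a \<in> A"
  shows "(dual_shift A ^^ t) (ev A k) a = a (k + t)"
  using dual_shift_pow[OF anq a] A_shiftpow[OF anq a] by (simp add: ev_def shiftpow_apply)

lemma map_dual_shift_pow:
  assumes anq: "anqie A" and a: "a \<in> A"
  shows "(\<lambda>\<rho>. (dual_shift A ^^ t) \<rho> a) = (\<lambda>\<rho>. \<rho> ((shiftA ^^ t) a))"
  using dual_shift_pow[OF anq a] by blast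

section \<open>Injectivity on generators\<close>

lemma supnorm_shiftpow: "f \<in> linf \<Longrightarrow> supnorm ((shiftA ^^ m) f) \<le> supnorm f"
  by (rule supnorm_le) (simp add: shiftpow_apply supnorm_ge)

lemma linf_diff: "f \<in> linf \<Longrightarrow> g \<in> linf \<Longrightarrow> (\<lambda>n. f n - g n) \<in> linf"
  using A_diff[OF linf_anqie] .

lemma chars_gen_unique:
  assumes fl: "\<And>i. f i \<in> linf"
    and ch1: "\<rho> \<in> chars (anqie_gen (range f))" and ch2: "\<sigma> \<in> chars (anqie_gen (range f))"
    and eq: "\<And>i s. \<rho> ((shiftA ^^ s) (f i)) = \<sigma> ((shiftA ^^ s) (f i))"
  shows "\<rho> = \<sigma>"
proof -
  define A where "A = anqie_gen (range f)"
  have anq: "anqie A" unfolding A_def using fl by (intro anqie_gen_anqie) auto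
  note ch1 = ch1[folded A_def] and ch2 = ch2[folded A_def]
  define E where "E = {a \<in> A. \<forall>m. \<rho> ((shiftA ^^ m) a) = \<sigma> ((shiftA ^^ m) a)}"
  have sp_add: "(shiftA ^^ m) (\<lambda>n. a n + b n) = (\<lambda>n. (shiftA ^^ m) a n + (shiftA ^^ m) b n)" for m a b
    by (simp add: shiftpow_eq)
  have sp_mult: "(shiftA ^^ m) (\<lambda>n. a n * b n) = (\<lambda>n. (shiftA ^^ m) a n * (shiftA ^^ m) b n)" for m a b
    by (simp add: shiftpow_eq)
  have sp_scal: "(shiftA ^^ m) (\<lambda>n. c * a n) = (\<lambda>n. c * (shiftA ^^ m) a n)" for m a c
    by (simp add: shiftpow_eq)
  have sp_cnj: "(shiftA ^^ m) (\<lambda>n. cnj (a n)) = (\<lambda>n. cnj ((shiftA ^^ m) a n))" for m a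
    by (simp add: shiftpow_eq)
  have sp_one: "(shiftA ^^ m) (\<lambda>n. 1) = (\<lambda>n. 1)" for m
    by (simp add: shiftpow_eq)
  have sp_sh: "(shiftA ^^ m) (shiftA a) = (shiftA ^^ Suc m) a" for m a
    by (simp add: funpow_Suc_right del: funpow.simps)
  have cont: "(\<lambda>k. \<tau> ((shiftA ^^ m) (s k))) \<longlonglongrightarrow> \<tau> ((shiftA ^^ m) a)"
    if tau: "\<tau> \<in> chars A" and sA: "\<And>k. s k \<in> A" and aA: "a \<in> A"
      and lim: "(\<lambda>k. supnorm (\<lambda>n. s k n - a n)) \<longlonglongrightarrow> 0" for \<tau> s a m
  proof -
    have "norm (\<tau> ((shiftA ^^ m) (s k)) - \<tau> ((shiftA ^^ m) a)) \<le> supnorm (\<lambda>n. s k n - a n)" for k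
    proof -
      have dA: "(\<lambda>n. s k n - a n) \<in> A" by (rule A_diff[OF anq sA aA])
      have "\<tau> ((shiftA ^^ m) (s k)) - \<tau> ((shiftA ^^ m) a) = \<tau> ((shiftA ^^ m) (\<lambda>n. s k n - a n))"
        using ch_diff[OF tau anq A_shiftpow[OF anq sA] A_shiftpow[OF anq aA]] by (simp add: shiftpow_eq)
      also have "norm \<dots> \<le> supnorm ((shiftA ^^ m) (\<lambda>n. s k n - a n))"
        by (rule char_bound[OF anq tau A_shiftpow[OF anq dA]])
      also have "\<dots> \<le> supnorm (\<lambda>n. s k n - a n)"
        by (rule supnorm_shiftpow[OF A_linf[OF anq dA]])
      finally show ?thesis .
    qed
    then have "(\<lambda>k. \<tau> ((shiftA ^^ m) (s k)) - \<tau> ((shiftA ^^ m) a)) \<longlonglongrightarrow> 0"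
      by (intro Lim_null_comparison[OF _ lim]) simp
    then show ?thesis by (simp add: LIM_zero_iff)
  qed
  have "anqie E"
    unfolding anqie_def
  proof (intro conjI)
    show "E \<subseteq> linf" unfolding E_def using A_linf[OF anq] by blast
    show "(\<lambda>n. 1) \<in> E" unfolding E_def using A_one[OF anq] ch_one[OF ch1] ch_one[OF ch2] by (simp add: sp_one)
    show "\<forall>a\<in>E. \<forall>b\<in>E. (\<lambda>n. a n + b n) \<in> E" unfolding E_def
      using A_add[OF anq] A_shiftpow[OF anq] ch_add[OF ch1] ch_add[OF ch2] by (simp add: sp_add)
    show "\<forall>a\<in>E. \<forall>b\<in>E. (\<lambda>n. a n * b n) \<in> E" unfolding E_def
      using A_mult[OF anq] A_shiftpow[OF anq] ch_mult[OF ch1] ch_mult[OF ch2] by (simp add: sp_mult)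
    show "\<forall>c. \<forall>a\<in>E. (\<lambda>n. c * a n) \<in> E" unfolding E_def
      using A_scal[OF anq] A_shiftpow[OF anq] ch_scal[OF ch1] ch_scal[OF ch2] by (simp add: sp_scal)
    show "\<forall>a\<in>E. (\<lambda>n. cnj (a n)) \<in> E" unfolding E_def
      using A_cnj[OF anq] A_shiftpow[OF anq] char_cnj[OF anq ch1] char_cnj[OF anq ch2] by (simp add: sp_cnj)
    show "\<forall>a\<in>E. shiftA a \<in> E"
    proof
      fix a assume "a \<in> E"
      then have aA: "a \<in> A" and h: "\<And>m. \<rho> ((shiftA ^^ m) a) = \<sigma> ((shiftA ^^ m) a)" unfolding E_def by auto
      have "\<rho> ((shiftA ^^ m) (shiftA a)) = \<sigma> ((shiftA ^^ m) (shiftA a))" for m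
        using h[of "Suc m"] by (simp only: sp_sh)
      then show "shiftA a \<in> E" unfolding E_def using A_shift[OF anq aA] by blast
    qed
    show "\<forall>s a. (\<forall>k. s k \<in> E) \<and> a \<in> linf \<and> (\<lambda>k. supnorm (\<lambda>n. s k n - a n)) \<longlonglongrightarrow> 0 \<longrightarrow> a \<in> E"
    proof (intro allI impI)
      fix s a assume h: "(\<forall>k. s k \<in> E) \<and> a \<in> linf \<and> (\<lambda>k. supnorm (\<lambda>n. s k n - a n)) \<longlonglongrightarrow> 0"
      then have sA: "\<And>k. s k \<in> A" and sE: "\<And>k m. \<rho> ((shiftA ^^ m) (s k)) = \<sigma> ((shiftA ^^ m) (s k))"
        unfolding E_def by auto
      have aA: "a \<in> A" using A_lim[OF anq, of s a] sA h by blast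
      have "\<rho> ((shiftA ^^ m) a) = \<sigma> ((shiftA ^^ m) a)" for m
      proof -
        have hl: "(\<lambda>k. supnorm (\<lambda>n. s k n - a n)) \<longlonglongrightarrow> 0" using h by blast
        have l1: "(\<lambda>k. \<rho> ((shiftA ^^ m) (s k))) \<longlonglongrightarrow> \<rho> ((shiftA ^^ m) a)"
          by (rule cont[OF ch1 sA aA hl])
        have l2: "(\<lambda>k. \<sigma> ((shiftA ^^ m) (s k))) \<longlonglongrightarrow> \<sigma> ((shiftA ^^ m) a)"
          by (rule cont[OF ch2 sA aA hl])
        have "(\<lambda>k. \<rho> ((shiftA ^^ m) (s k))) = (\<lambda>k. \<sigma> ((shiftA ^^ m) (s k)))" using sE by simp
        with l1 l2 show ?thesis using LIMSEQ_unique by metis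
      qed
      then show "a \<in> E" unfolding E_def using aA by blast
    qed
  qed
  moreover have "range f \<subseteq> E" unfolding E_def using anqie_gen_sub[of "range f"] eq A_def by auto
  ultimately have AE: "A \<subseteq> E" unfolding A_def by (rule anqie_gen_least)
  show ?thesis
  proof
    fix a show "\<rho> a = \<sigma> a"
    proof (cases "a \<in> A")
      case True then show ?thesis using AE unfolding E_def by (metis (mono_tags, lifting) mem_Collect_eq subsetD funpow_0)
    next
      case False then show ?thesis using ch_out[OF ch1] ch_out[OF ch2] by simp
    qed
  qed
qed

section \<open>Compactness\<close>

lemma closed_cond: "(C \<Longrightarrow> closed {x. P x}) \<Longrightarrow> closed {x. C \<longrightarrow> P x}"
  by (cases C) auto

lemma cont_coord: "continuous_on UNIV (\<lambda>\<rho>::arith \<Rightarrow> complex. \<rho> a)"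
  by (rule continuous_on_product_coordinates)

lemma chars_closed: "closed (chars A)"
proof -
  have c: "continuous_on UNIV (\<lambda>\<rho>::arith \<Rightarrow> complex. \<rho> a)" for a by (rule cont_coord)
  have eq: "chars A =
     {\<rho>. \<forall>f g. f \<in> A \<and> g \<in> A \<longrightarrow> \<rho> (\<lambda>n. f n + g n) = \<rho> f + \<rho> g} \<inter>
     {\<rho>. \<forall>f g. f \<in> A \<and> g \<in> A \<longrightarrow> \<rho> (\<lambda>n. f n * g n) = \<rho> f * \<rho> g} \<inter>
     {\<rho>. \<forall>c f. f \<in> A \<longrightarrow> \<rho> (\<lambda>n. c * f n) = c * \<rho> f} \<inter>
     {\<rho>. \<rho> (\<lambda>n. 1) = 1} \<inter>
     {\<rho>. \<forall>f. f \<notin> A \<longrightarrow> \<rho> f = 0}"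
    unfolding chars_def by auto
  show ?thesis unfolding eq
    by (intro closed_Int closed_Collect_all closed_cond closed_Collect_eq continuous_intros c)
qed

lemma chars_compact:
  assumes anq: "anqie A"
  shows "compact (chars A)"
proof -
  define bd where "bd a = (if a \<in> A then supnorm a else 0)" for a
  define P where "P = PiE UNIV (\<lambda>a. cball (0::complex) (bd a))"
  have "compactin (product_topology (\<lambda>_. euclidean) UNIV) P"
    unfolding P_def compactin_PiE by auto
  then have cP: "compact P" by (simp add: euclidean_product_topology)
  have "chars A \<subseteq> P"
  proof
    fix \<rho> assume ch: "\<rho> \<in> chars A"
    have "\<rho> a \<in> cball 0 (bd a)" for a
      using char_bound[OF anq ch, of a] ch_out[OF ch, of a] unfolding bd_def by auto
    then show "\<rho> \<in> P" unfolding P_def by auto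
  qed
  then have "chars A = P \<inter> chars A" by blast
  then show ?thesis using compact_Int_closed[OF cP chars_closed[of A]] by metis
qed



lemma cont_dist_coord: "continuous_on UNIV (\<lambda>\<tau>::arith \<Rightarrow> complex. cmod (\<tau> a - z))"
  by (rule continuous_on_norm[OF continuous_on_diff[OF cont_coord continuous_on_const]])
lemma open_coord_far: "open {\<tau>::arith \<Rightarrow> complex. r < cmod (\<tau> a - z)}"
  by (rule open_Collect_less[OF continuous_on_const cont_dist_coord])
lemma open_coord_near: "open {\<tau>::arith \<Rightarrow> complex. cmod (\<tau> a - z) < r}"
  by (rule open_Collect_less[OF cont_dist_coord continuous_on_const])

lemma open_coord_box: "finite J \<Longrightarrow> open {\<tau>::arith \<Rightarrow> complex. \<forall>c\<in>J. cmod (\<tau> (\<phi> c) - z c) < r c}"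
proof -
  assume fin: "finite J"
  have "{\<tau>::arith \<Rightarrow> complex. \<forall>c\<in>J. cmod (\<tau> (\<phi> c) - z c) < r c}
        = UNIV \<inter> (\<Inter>c\<in>J. {\<tau>. cmod (\<tau> (\<phi> c) - z c) < r c})" by auto
  also have "open \<dots>"
  proof -
    have "open {\<tau>::arith \<Rightarrow> complex. cmod (\<tau> (\<phi> c) - z c) < r c}" for c
      by (rule open_coord_near)
    then show ?thesis using fin by (intro open_Int open_UNIV open_INT) auto
  qed
  finally show ?thesis .
qed

lemma local_box:
  fixes X :: "(arith \<Rightarrow> complex) set" and \<phi> :: "'c \<Rightarrow> arith"
  assumes cX: "compact X"
    and inj: "\<And>\<rho> \<sigma>. \<rho> \<in> X \<Longrightarrow> \<sigma> \<in> X \<Longrightarrow> (\<And>c. \<rho> (\<phi> c) = \<sigma> (\<phi> c)) \<Longrightarrow> \<rho> = \<sigma>"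
    and V: "openin (subtopology euclidean X) V" and \<rho>: "\<rho> \<in> V"
  shows "\<exists>J \<eta>. finite J \<and> 0 < \<eta> \<and> (\<forall>\<sigma>\<in>X. (\<forall>c\<in>J. cmod (\<sigma> (\<phi> c) - \<rho> (\<phi> c)) < \<eta>) \<longrightarrow> \<sigma> \<in> V)"
proof -
  obtain W where W: "open W" "V = W \<inter> X" using V by (auto simp: openin_open)
  have \<rho>X: "\<rho> \<in> X" and \<rho>W: "\<rho> \<in> W" using \<rho> W by auto
  define K where "K = X \<inter> - W"
  have cK: "compact K" unfolding K_def using cX W(1) by (intro compact_Int_closed) auto
  define cc where "cc \<sigma> = (SOME c. \<sigma> (\<phi> c) \<noteq> \<rho> (\<phi> c))" for \<sigma>
  define d where "d \<sigma> = cmod (\<sigma> (\<phi> (cc \<sigma>)) - \<rho> (\<phi> (cc \<sigma>)))" for \<sigma>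
  have dpos: "0 < d \<sigma>" if "\<sigma> \<in> K" for \<sigma>
  proof -
    have "\<sigma> \<noteq> \<rho>" using that \<rho>W unfolding K_def by auto
    then have "\<exists>c. \<sigma> (\<phi> c) \<noteq> \<rho> (\<phi> c)" using inj[of \<sigma> \<rho>] that \<rho>X unfolding K_def by auto
    then have "\<sigma> (\<phi> (cc \<sigma>)) \<noteq> \<rho> (\<phi> (cc \<sigma>))" unfolding cc_def by (rule someI_ex)
    then show ?thesis unfolding d_def by simp
  qed
  define Ob where "Ob \<sigma> = {\<tau>. d \<sigma> / 2 < cmod (\<tau> (\<phi> (cc \<sigma>)) - \<rho> (\<phi> (cc \<sigma>)))}" for \<sigma>
  have "K \<subseteq> (\<Union>\<sigma>\<in>K. Ob \<sigma>)"
  proof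
    fix \<sigma> assume "\<sigma> \<in> K" then show "\<sigma> \<in> (\<Union>\<sigma>\<in>K. Ob \<sigma>)"
      using dpos[of \<sigma>] unfolding Ob_def d_def by (intro UN_I[of \<sigma>]) auto
  qed
  moreover have Obo: "\<And>\<sigma>. \<sigma> \<in> K \<Longrightarrow> open (Ob \<sigma>)" unfolding Ob_def by (rule open_coord_far)
  ultimately obtain T where T: "T \<subseteq> K" "finite T" "K \<subseteq> (\<Union>\<sigma>\<in>T. Ob \<sigma>)"
    using compactE_image[OF cK, of K Ob] by blast
  define J where "J = cc ` T"
  define \<eta> where "\<eta> = Min (insert 1 ((\<lambda>\<sigma>. d \<sigma> / 2) ` T))"
  have \<eta>pos: "0 < \<eta>" unfolding \<eta>_def using T dpos by (subst Min_gr_iff) auto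
  have \<eta>le: "\<eta> \<le> d \<sigma> / 2" if "\<sigma> \<in> T" for \<sigma> unfolding \<eta>_def using T(2) that by (intro Min_le) auto
  show ?thesis
  proof (intro exI conjI ballI impI)
    show "finite J" unfolding J_def using T by simp
    show "0 < \<eta>" by (rule \<eta>pos)
    fix \<sigma> assume \<sigma>X: "\<sigma> \<in> X" and near: "\<forall>c\<in>J. cmod (\<sigma> (\<phi> c) - \<rho> (\<phi> c)) < \<eta>"
    show "\<sigma> \<in> V"
    proof (rule ccontr)
      assume "\<sigma> \<notin> V"
      then have "\<sigma> \<in> K" using \<sigma>X W unfolding K_def by auto
      then obtain s where s: "s \<in> T" "\<sigma> \<in> Ob s" using T by auto
      have "cc s \<in> J" unfolding J_def using s by auto
      then have "cmod (\<sigma> (\<phi> (cc s)) - \<rho> (\<phi> (cc s))) < \<eta>" using near by blast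
      moreover have "d s / 2 < cmod (\<sigma> (\<phi> (cc s)) - \<rho> (\<phi> (cc s)))" using s unfolding Ob_def by auto
      ultimately show False using \<eta>le[OF s(1)] by simp
    qed
  qed
qed

lemma lebesgue_box:
  fixes X :: "(arith \<Rightarrow> complex) set" and \<phi> :: "'c \<Rightarrow> arith"
  assumes cX: "compact X"
    and inj: "\<And>\<rho> \<sigma>. \<rho> \<in> X \<Longrightarrow> \<sigma> \<in> X \<Longrightarrow> (\<And>c. \<rho> (\<phi> c) = \<sigma> (\<phi> c)) \<Longrightarrow> \<rho> = \<sigma>"
    and Uo: "\<And>V. V \<in> \<U> \<Longrightarrow> openin (subtopology euclidean X) V" and Uc: "X \<subseteq> \<Union>\<U>"
  shows "\<exists>J \<eta>. finite J \<and> 0 < \<eta> \<and> (\<forall>\<rho>\<in>X. \<exists>V\<in>\<U>. \<forall>\<sigma>\<in>X. (\<forall>c\<in>J. cmod (\<sigma> (\<phi> c) - \<rho> (\<phi> c)) < \<eta>) \<longrightarrow> \<sigma> \<in> V)"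
proof -
  define P where "P \<rho> V J \<eta> \<longleftrightarrow> V \<in> \<U> \<and> finite J \<and> 0 < \<eta> \<and> (\<forall>\<sigma>\<in>X. (\<forall>c\<in>J. cmod (\<sigma> (\<phi> c) - \<rho> (\<phi> c)) < \<eta>) \<longrightarrow> \<sigma> \<in> V)"
    for \<rho> V J \<eta>
  have ex: "\<exists>V J \<eta>. P \<rho> V J \<eta>" if rX: "\<rho> \<in> X" for \<rho>
  proof -
    obtain V where V: "V \<in> \<U>" "\<rho> \<in> V" using Uc rX by blast
    from local_box[where X=X and \<phi>=\<phi> and V=V and \<rho>=\<rho>, OF cX inj Uo[OF V(1)] V(2)] obtain J \<eta> where
      "finite J" "0 < \<eta>" "\<forall>\<sigma>\<in>X. (\<forall>c\<in>J. cmod (\<sigma> (\<phi> c) - \<rho> (\<phi> c)) < \<eta>) \<longrightarrow> \<sigma> \<in> V"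
      by blast
    then have "P \<rho> V J \<eta>" unfolding P_def using V(1) by blast
    then show ?thesis by blast
  qed
  have "\<forall>\<rho>. \<exists>V J \<eta>. \<rho> \<in> X \<longrightarrow> P \<rho> V J \<eta>" using ex by blast
  then obtain VV JJ \<eta>\<eta> where VJ0: "\<And>\<rho>. \<rho> \<in> X \<Longrightarrow> P \<rho> (VV \<rho>) (JJ \<rho>) (\<eta>\<eta> \<rho>)"
    by metis
  have VJ: "\<And>\<rho>. \<rho> \<in> X \<Longrightarrow> VV \<rho> \<in> \<U> \<and> finite (JJ \<rho>) \<and> 0 < \<eta>\<eta> \<rho> \<and>
      (\<forall>\<sigma>\<in>X. (\<forall>c\<in>JJ \<rho>. cmod (\<sigma> (\<phi> c) - \<rho> (\<phi> c)) < \<eta>\<eta> \<rho>) \<longrightarrow> \<sigma> \<in> VV \<rho>)"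
    using VJ0 unfolding P_def by blast
  define B where "B \<rho> = {\<tau>. \<forall>c\<in>JJ \<rho>. cmod (\<tau> (\<phi> c) - \<rho> (\<phi> c)) < \<eta>\<eta> \<rho> / 2}" for \<rho>
  have Bo: "open (B \<rho>)" if "\<rho> \<in> X" for \<rho>
    unfolding B_def using open_coord_box[of "JJ \<rho>" \<phi> "\<lambda>c. \<rho> (\<phi> c)" "\<lambda>_. \<eta>\<eta> \<rho> / 2"] VJ[OF that] by simp
  have "X \<subseteq> (\<Union>\<rho>\<in>X. B \<rho>)"
  proof
    fix \<rho> assume "\<rho> \<in> X" then show "\<rho> \<in> (\<Union>\<rho>\<in>X. B \<rho>)"
      using VJ[of \<rho>] unfolding B_def by (intro UN_I[of \<rho>]) auto
  qed
  then obtain T where T: "T \<subseteq> X" "finite T" "X \<subseteq> (\<Union>\<rho>\<in>T. B \<rho>)"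
    using compactE_image[OF cX, of X B, OF Bo] by blast
  define J where "J = (\<Union>\<rho>\<in>T. JJ \<rho>)"
  define \<eta> where "\<eta> = Min (insert 1 ((\<lambda>\<rho>. \<eta>\<eta> \<rho> / 2) ` T))"
  have \<eta>pos: "0 < \<eta>" unfolding \<eta>_def using T VJ by (subst Min_gr_iff) auto
  have \<eta>le: "\<eta> \<le> \<eta>\<eta> \<rho> / 2" if "\<rho> \<in> T" for \<rho> unfolding \<eta>_def using T(2) that by (intro Min_le) auto
  show ?thesis
  proof (intro exI conjI ballI)
    show "finite J" unfolding J_def using T VJ by auto
    show "0 < \<eta>" by (rule \<eta>pos)
    fix \<rho> assume \<rho>X: "\<rho> \<in> X"
    then obtain \<rho>0 where \<rho>0: "\<rho>0 \<in> T" "\<rho> \<in> B \<rho>0" using T by auto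
    have \<rho>0X: "\<rho>0 \<in> X" using \<rho>0 T by auto
    show "\<exists>V\<in>\<U>. \<forall>\<sigma>\<in>X. (\<forall>c\<in>J. cmod (\<sigma> (\<phi> c) - \<rho> (\<phi> c)) < \<eta>) \<longrightarrow> \<sigma> \<in> V"
    proof (intro bexI[of _ "VV \<rho>0"] ballI impI)
      show "VV \<rho>0 \<in> \<U>" using VJ[OF \<rho>0X] by blast
      fix \<sigma> assume \<sigma>X: "\<sigma> \<in> X" and near: "\<forall>c\<in>J. cmod (\<sigma> (\<phi> c) - \<rho> (\<phi> c)) < \<eta>"
      have "cmod (\<sigma> (\<phi> c) - \<rho>0 (\<phi> c)) < \<eta>\<eta> \<rho>0" if c: "c \<in> JJ \<rho>0" for c
      proof -
        have "c \<in> J" unfolding J_def using c \<rho>0 by auto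
        then have 1: "cmod (\<sigma> (\<phi> c) - \<rho> (\<phi> c)) < \<eta>" using near by blast
        have 2: "cmod (\<rho> (\<phi> c) - \<rho>0 (\<phi> c)) < \<eta>\<eta> \<rho>0 / 2" using \<rho>0(2) c unfolding B_def by auto
        have "cmod (\<sigma> (\<phi> c) - \<rho>0 (\<phi> c)) \<le> cmod (\<sigma> (\<phi> c) - \<rho> (\<phi> c)) + cmod (\<rho> (\<phi> c) - \<rho>0 (\<phi> c))"
          using norm_triangle_ineq[of "\<sigma> (\<phi> c) - \<rho> (\<phi> c)" "\<rho> (\<phi> c) - \<rho>0 (\<phi> c)"] by simp
        then show ?thesis using 1 2 \<eta>le[OF \<rho>0(1)] by simp
      qed
      then show "\<sigma> \<in> VV \<rho>0" using VJ[OF \<rho>0X] \<sigma>X by blast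
    qed
  qed
qed



definition sep :: "(nat \<Rightarrow> 'x \<Rightarrow> complex) \<Rightarrow> 'x set \<Rightarrow> real \<Rightarrow> nat set \<Rightarrow> bool" where
  "sep w I r S \<longleftrightarrow> (\<forall>k\<in>S. \<forall>k'\<in>S. k \<noteq> k' \<longrightarrow> (\<exists>x\<in>I. r \<le> cmod (w k x - w k' x)))"

definition quant :: "real \<Rightarrow> complex \<Rightarrow> int \<times> int" where
  "quant q z = (\<lfloor>Re z / q\<rfloor>, \<lfloor>Im z / q\<rfloor>)"

lemma floor_same: "\<lfloor>x::real\<rfloor> = \<lfloor>y\<rfloor> \<Longrightarrow> \<bar>x - y\<bar> < 1"
proof -
  assume e: "\<lfloor>x\<rfloor> = \<lfloor>y\<rfloor>"
  have "of_int \<lfloor>x\<rfloor> \<le> x" "x < of_int \<lfloor>x\<rfloor> + 1" "of_int \<lfloor>y\<rfloor> \<le> y" "y < of_int \<lfloor>y\<rfloor> + 1"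
    by simp_all
  then show ?thesis using e by linarith
qed

lemma quant_close:
  assumes q: "0 < q" and eq: "quant q z = quant q z'"
  shows "cmod (z - z') < 2 * q"
proof -
  have "\<lfloor>Re z / q\<rfloor> = \<lfloor>Re z' / q\<rfloor>" "\<lfloor>Im z / q\<rfloor> = \<lfloor>Im z' / q\<rfloor>" using eq by (auto simp: quant_def)
  then have "\<bar>Re z / q - Re z' / q\<bar> < 1" "\<bar>Im z / q - Im z' / q\<bar> < 1"
    by (simp_all add: floor_same)
  then have "\<bar>Re (z - z')\<bar> < q" "\<bar>Im (z - z')\<bar> < q"
    using q by (simp_all add: diff_divide_distrib[symmetric] abs_divide divide_less_eq)
  then show ?thesis using cmod_le[of "z - z'"] by linarith
qed

lemma quant_range:
  assumes q: "0 < q" and z: "cmod z \<le> R"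
  shows "quant q z \<in> {-(\<lceil>R/q\<rceil>+1)..\<lceil>R/q\<rceil>+1} \<times> {-(\<lceil>R/q\<rceil>+1)..\<lceil>R/q\<rceil>+1}"
proof -
  have b: "\<lfloor>t / q\<rfloor> \<in> {-(\<lceil>R/q\<rceil>+1)..\<lceil>R/q\<rceil>+1}" if t: "\<bar>t\<bar> \<le> R" for t
  proof -
    have "\<bar>t / q\<bar> \<le> R / q" using t q by (simp add: abs_divide divide_right_mono)
    then have "- (R/q) \<le> t/q" "t/q \<le> R/q" by linarith+
    moreover have "R/q \<le> of_int \<lceil>R/q\<rceil>" by (rule le_of_int_ceiling)
    ultimately have h1: "-(of_int \<lceil>R/q\<rceil>) - 1 < (of_int \<lfloor>t/q\<rfloor> :: real)"
      using of_int_floor_le[of "t/q"] real_of_int_floor_gt_diff_one[of "t/q"] by linarith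
    have h2: "of_int \<lfloor>t/q\<rfloor> \<le> of_int \<lceil>R/q\<rceil> + (1::real)"
      using \<open>t/q \<le> R/q\<close> \<open>R/q \<le> of_int \<lceil>R/q\<rceil>\<close> of_int_floor_le[of "t/q"] by linarith
    have "of_int (-\<lceil>R/q\<rceil> - 1) < (of_int \<lfloor>t/q\<rfloor> :: real)" using h1 by simp
    then have "-\<lceil>R/q\<rceil> - 1 < \<lfloor>t/q\<rfloor>" using of_int_less_iff by blast
    moreover have "of_int \<lfloor>t/q\<rfloor> \<le> (of_int (\<lceil>R/q\<rceil> + 1) :: real)" using h2 by simp
    then have "\<lfloor>t/q\<rfloor> \<le> \<lceil>R/q\<rceil> + 1" using of_int_le_iff by blast
    ultimately show ?thesis by simp
  qed
  show ?thesis unfolding quant_def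
    using b[of "Re z"] b[of "Im z"] abs_Re_le_cmod[of z] abs_Im_le_cmod[of z] z by auto
qed

lemma sep_bound:
  assumes fin: "finite I" and r: "0 < r" and R: "\<And>k x. x \<in> I \<Longrightarrow> cmod (w k x) \<le> R"
  shows "\<exists>N. \<forall>S. sep w I r S \<longrightarrow> finite S \<and> card S \<le> N"
proof -
  define q where "q = r / 2"
  have q: "0 < q" unfolding q_def using r by simp
  define M where "M = \<lceil>R/q\<rceil>+1"
  define G where "G = {-M..M} \<times> {-M..M}"
  define word where "word k = restrict (\<lambda>x. quant q (w k x)) I" for k
  have wP: "word k \<in> PiE I (\<lambda>_. G)" for k
    unfolding word_def G_def M_def using quant_range[OF q R] by auto
  have finP: "finite (PiE I (\<lambda>_. G))" unfolding G_def using fin by (intro finite_PiE) auto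
  show ?thesis
  proof (intro exI allI impI)
    fix S assume s: "sep w I r S"
    have inj: "inj_on word S"
    proof
      fix k k' assume k: "k \<in> S" "k' \<in> S" and eq: "word k = word k'"
      show "k = k'"
      proof (rule ccontr)
        assume "k \<noteq> k'"
        then obtain x where x: "x \<in> I" "r \<le> cmod (w k x - w k' x)" using s k unfolding sep_def by blast
        have "quant q (w k x) = quant q (w k' x)"
          using fun_cong[OF eq, of x] x(1) unfolding word_def by simp
        then have "cmod (w k x - w k' x) < r" using quant_close[OF q] unfolding q_def by fastforce
        then show False using x(2) by simp
      qed
    qed
    have sub: "word ` S \<subseteq> PiE I (\<lambda>_. G)" using wP by auto
    have "finite S" using finite_imageD[OF finite_subset[OF sub finP] inj] .
    moreover have "card S \<le> card (PiE I (\<lambda>_. G))" using card_inj_on_le[OF inj sub finP] .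
    ultimately show "finite S \<and> card S \<le> card (PiE I (\<lambda>_. G))" by simp
  qed
qed

lemma sep_max:
  assumes fin: "finite I" and r: "0 < r" and R: "\<And>k x. x \<in> I \<Longrightarrow> cmod (w k x) \<le> R"
  shows "\<exists>S. finite S \<and> sep w I r S \<and> (\<forall>k. \<exists>s\<in>S. \<forall>x\<in>I. cmod (w k x - w s x) < r)"
proof -
  obtain N where N: "\<And>S. sep w I r S \<Longrightarrow> finite S \<and> card S \<le> N" using sep_bound[where w=w and R=R, OF fin r R] by blast
  define C where "C = {card S | S. sep w I r S}"
  have C0: "0 \<in> C" unfolding C_def sep_def by (intro CollectI exI[of _ "{}"]) simp
  have "C \<subseteq> {..N}" unfolding C_def using N by blast
  then have Cfin: "finite C" using finite_subset by blast
  have "Max C \<in> C" using Cfin C0 by (intro Max_in) auto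
  then obtain S where S: "sep w I r S" "card S = Max C" unfolding C_def by auto
  have Sfin: "finite S" using N[OF S(1)] by simp
  have span: "\<exists>s\<in>S. \<forall>x\<in>I. cmod (w k x - w s x) < r" for k
  proof (rule ccontr)
    assume ns: "\<not> ?thesis"
    then have kS: "k \<notin> S" using r by force
    have far: "\<forall>s\<in>S. \<exists>x\<in>I. r \<le> cmod (w k x - w s x)" using ns by (auto simp: not_less)
    have "sep w I r (insert k S)"
      unfolding sep_def
    proof (intro ballI impI)
      fix a b assume a: "a \<in> insert k S" and b: "b \<in> insert k S" and ab: "a \<noteq> b"
      show "\<exists>x\<in>I. r \<le> cmod (w a x - w b x)"
      proof (cases "a = k")
        case True then show ?thesis using far b ab by auto
      next
        case False
        show ?thesis
        proof (cases "b = k")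
          case True then show ?thesis using far a False by (auto simp: norm_minus_commute)
        next
          case False then show ?thesis using \<open>a \<noteq> k\<close> a b ab S(1) unfolding sep_def by auto
        qed
      qed
    qed
    then have "card (insert k S) \<in> C" unfolding C_def by blast
    then have "card (insert k S) \<le> Max C" using Cfin by simp
    then show False using S(2) Sfin kS by simp
  qed
  show ?thesis using Sfin S(1) span by blast
qed



lemma sub_iter:
  fixes a :: "nat \<Rightarrow> real"
  assumes sub: "\<And>m n. a (m + n) \<le> a m + a n"
  shows "a (q * m + r) \<le> real q * a m + a r"
proof (induction q)
  case 0 then show ?case by simp
next
  case (Suc q)
  have "a (Suc q * m + r) = a (m + (q * m + r))" by (simp add: add.assoc)
  also have "\<dots> \<le> a m + a (q * m + r)" by (rule sub)
  also have "\<dots> \<le> a m + (real q * a m + a r)" using Suc by simp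
  finally show ?case by (simp add: algebra_simps)
qed

lemma fekete:
  fixes a :: "nat \<Rightarrow> real"
  assumes sub: "\<And>m n. a (m + n) \<le> a m + a n" and nn: "\<And>n. 0 \<le> a n"
  shows "convergent (\<lambda>n. a n / real n)"
proof -
  define L where "L = Inf ((\<lambda>n. a n / real n) ` {1..})"
  have bdd: "bdd_below ((\<lambda>n. a n / real n) ` {1..})"
    using nn by (intro bdd_belowI[of _ 0]) auto
  have Lle: "L \<le> a n / real n" if "1 \<le> n" for n
    unfolding L_def using bdd that by (intro cInf_lower) auto
  have "(\<lambda>n. a n / real n) \<longlonglongrightarrow> L"
  proof (rule LIMSEQ_I)
    fix e :: real assume e: "0 < e"
    have "\<exists>m\<in>{1..}. a m / real m < L + e / 2"
    proof (rule ccontr)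
      assume "\<not> ?thesis"
      then have "\<forall>m\<in>{1..}. L + e / 2 \<le> a m / real m" by (auto simp: not_less)
      then have "L + e / 2 \<le> L" unfolding L_def
        by (intro cInf_greatest) auto
      then show False using e by simp
    qed
    then obtain m where m: "1 \<le> m" "a m / real m < L + e / 2" by auto
    define C where "C = Max (a ` {..<m})"
    have Cge: "a r \<le> C" if "r < m" for r unfolding C_def using that by (intro Max_ge) auto
    have C0: "0 \<le> C" using Cge[of 0] nn[of 0] m(1) by simp
    define N0 where "N0 = max m (nat \<lceil>2 * C / e\<rceil> + 1)"
    show "\<exists>no. \<forall>n\<ge>no. norm (a n / real n - L) < e"
    proof (intro exI allI impI)
      fix n assume n: "N0 \<le> n"
      then have n1: "1 \<le> n" and nm: "m \<le> n" unfolding N0_def using m(1) by auto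
      have npos: "0 < real n" using n1 by simp
      define q where "q = n div m"
      define r where "r = n mod m"
      have nqr: "n = q * m + r" unfolding q_def r_def by simp
      have rm: "r < m" unfolding r_def using m(1) by simp
      have "a n \<le> real q * a m + a r" using sub_iter[OF sub, of q m r] nqr by simp
      also have "\<dots> \<le> real q * a m + C" using Cge[OF rm] by simp
      finally have an: "a n \<le> real q * a m + C" .
      have "real q * real m \<le> real n" using nqr by (metis le_add1 of_nat_le_iff of_nat_mult)
      then have "real q * real m * a m \<le> real n * a m"
        using nn[of m] by (simp add: mult_right_mono)
      then have "real q * a m \<le> real n * (a m / real m)"
        using m(1) by (simp add: field_simps)
      then have "a n \<le> real n * (a m / real m) + C" using an by simp
      then have "a n / real n \<le> (real n * (a m / real m) + C) / real n"
        using npos by (simp add: divide_right_mono)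
      also have "\<dots> = a m / real m + C / real n" using npos by (simp add: add_divide_distrib)
      finally have "a n / real n \<le> a m / real m + C / real n" .
      moreover have "C / real n < e / 2"
      proof -
        have "nat \<lceil>2*C/e\<rceil> + 1 \<le> n" using n unfolding N0_def by simp
        then have "real (nat \<lceil>2*C/e\<rceil>) + 1 \<le> real n" by (metis of_nat_1 of_nat_add of_nat_le_iff)
        moreover have "2*C/e \<le> real (nat \<lceil>2*C/e\<rceil>)" by (rule real_nat_ceiling_ge)
        ultimately have "2 * C / e < real n" by linarith
        then show ?thesis using e npos by (simp add: field_simps)
      qed
      moreover have "L \<le> a n / real n" by (rule Lle[OF n1])
      ultimately have "\<bar>a n / real n - L\<bar> < e" using m(2) by linarith
      then show "norm (a n / real n - L) < e" by simp
    qed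
  qed
  then show ?thesis by (rule convergentI)
qed



lemma cn_le: "V \<subseteq> \<U> \<Longrightarrow> finite V \<Longrightarrow> \<Union>V = topspace X \<Longrightarrow> cover_num X \<U> \<le> card V"
  unfolding cover_num_def by (intro cInf_lower) auto

lemma cn_attained:
  assumes "\<exists>V. V \<subseteq> \<U> \<and> finite V \<and> \<Union>V = topspace X"
  shows "\<exists>V. V \<subseteq> \<U> \<and> finite V \<and> \<Union>V = topspace X \<and> card V = cover_num X \<U>"
proof -
  have "{card V | V. V \<subseteq> \<U> \<and> finite V \<and> \<Union>V = topspace X} \<noteq> {}" using assms by blast
  then have "cover_num X \<U> \<in> {card V | V. V \<subseteq> \<U> \<and> finite V \<and> \<Union>V = topspace X}"
    unfolding cover_num_def by (rule Inf_nat_def1)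
  then obtain V where "cover_num X \<U> = card V" "V \<subseteq> \<U>" "finite V" "\<Union>V = topspace X"
    unfolding mem_Collect_eq by blast
  then show ?thesis by metis
qed

lemma cn_ge:
  assumes "\<exists>V. V \<subseteq> \<U> \<and> finite V \<and> \<Union>V = topspace X"
    and "\<And>V. V \<subseteq> \<U> \<Longrightarrow> finite V \<Longrightarrow> \<Union>V = topspace X \<Longrightarrow> k \<le> card V"
  shows "k \<le> cover_num X \<U>"
  using cn_attained[OF assms(1)] assms(2) by metis

lemma cn_pos:
  assumes "\<exists>V. V \<subseteq> \<U> \<and> finite V \<and> \<Union>V = topspace X" and ne: "topspace X \<noteq> {}"
  shows "1 \<le> cover_num X \<U>"
proof (rule cn_ge[OF assms(1)])
  fix V assume "V \<subseteq> \<U>" "finite V" "\<Union>V = topspace X"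
  then show "1 \<le> card V" using ne by (metis One_nat_def Suc_leI Union_empty card_gt_0_iff)
qed

lemma funpow_top:
  assumes "\<And>x. x \<in> topspace X \<Longrightarrow> T x \<in> topspace X"
  shows "x \<in> topspace X \<Longrightarrow> (T ^^ m) x \<in> topspace X"
  by (induction m) (auto simp: assms)

lemma join_combine:
  assumes Tt: "\<And>x. x \<in> topspace X \<Longrightarrow> T x \<in> topspace X"
    and E1: "E1 \<in> join_cover X T \<U> m" and E2: "E2 \<in> join_cover X T \<U> n"
  shows "topspace X \<inter> E1 \<inter> (T ^^ m) -` E2 \<in> join_cover X T \<U> (m + n)"
proof -
  obtain U1 where U1: "\<forall>i<m. U1 i \<in> \<U>" "E1 = topspace X \<inter> (\<Inter>i<m. (T ^^ i) -` U1 i)"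
    using E1 unfolding join_cover_def by auto
  obtain U2 where U2: "\<forall>i<n. U2 i \<in> \<U>" "E2 = topspace X \<inter> (\<Inter>i<n. (T ^^ i) -` U2 i)"
    using E2 unfolding join_cover_def by auto
  define U3 where "U3 i = (if i < m then U1 i else U2 (i - m))" for i
  have U3: "\<forall>i<m+n. U3 i \<in> \<U>" unfolding U3_def using U1 U2 by auto
  have "topspace X \<inter> E1 \<inter> (T ^^ m) -` E2 = topspace X \<inter> (\<Inter>i<m+n. (T ^^ i) -` U3 i)"
  proof (intro set_eqI iffI)
    fix x assume x: "x \<in> topspace X \<inter> E1 \<inter> (T ^^ m) -` E2"
    have "(T ^^ i) x \<in> U3 i" if i: "i < m + n" for i
    proof (cases "i < m")
      case True then show ?thesis using x U1 unfolding U3_def by auto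
    next
      case False
      then have "i - m < n" "i = (i - m) + m" using i by auto
      then have "(T ^^ (i - m)) ((T ^^ m) x) \<in> U2 (i - m)" using x U2 by auto
      then show ?thesis using False \<open>i = (i - m) + m\<close> unfolding U3_def by (metis funpow_add o_apply)
    qed
    then show "x \<in> topspace X \<inter> (\<Inter>i<m+n. (T ^^ i) -` U3 i)" using x by auto
  next
    fix x assume x: "x \<in> topspace X \<inter> (\<Inter>i<m+n. (T ^^ i) -` U3 i)"
    have "(T ^^ i) x \<in> U1 i" if "i < m" for i
    proof -
      have "(T ^^ i) x \<in> U3 i" using x that by auto
      then show ?thesis unfolding U3_def using that by simp
    qed
    then have "x \<in> E1" using x U1(2) by auto
    moreover have "(T ^^ m) x \<in> E2"
    proof -
      have "(T ^^ j) ((T ^^ m) x) \<in> U2 j" if j: "j < n" for j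
      proof -
        have "(T ^^ (j + m)) x \<in> U3 (j + m)" using x j by auto
        then show ?thesis unfolding U3_def by (simp add: funpow_add)
      qed
      then show ?thesis using U2 funpow_top[where X=X and T=T, OF Tt] x by auto
    qed
    ultimately show "x \<in> topspace X \<inter> E1 \<inter> (T ^^ m) -` E2" using x by auto
  qed
  then show ?thesis unfolding join_cover_def using U3 by auto
qed

lemma cn_submult:
  assumes Tt: "\<And>x. x \<in> topspace X \<Longrightarrow> T x \<in> topspace X"
    and ex: "\<And>n. \<exists>V. V \<subseteq> join_cover X T \<U> n \<and> finite V \<and> \<Union>V = topspace X"
  shows "cover_num X (join_cover X T \<U> (m + n)) \<le> cover_num X (join_cover X T \<U> m) * cover_num X (join_cover X T \<U> n)"
proof -
  obtain V1 where V1: "V1 \<subseteq> join_cover X T \<U> m" "finite V1" "\<Union>V1 = topspace X" "card V1 = cover_num X (join_cover X T \<U> m)"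
    using cn_attained[OF ex[of m]] by blast
  obtain V2 where V2: "V2 \<subseteq> join_cover X T \<U> n" "finite V2" "\<Union>V2 = topspace X" "card V2 = cover_num X (join_cover X T \<U> n)"
    using cn_attained[OF ex[of n]] by blast
  define W where "W = (\<lambda>(E1, E2). topspace X \<inter> E1 \<inter> (T ^^ m) -` E2) ` (V1 \<times> V2)"
  have jc: "topspace X \<inter> a \<inter> (T ^^ m) -` b \<in> join_cover X T \<U> (m + n)" if "a \<in> V1" "b \<in> V2" for a b
    using join_combine[where X=X and T=T and \<U>=\<U>, OF Tt] that V1(1) V2(1) by blast
  have Wsub: "W \<subseteq> join_cover X T \<U> (m + n)"
    unfolding W_def using jc by auto
  have Wfin: "finite W" unfolding W_def using V1(2) V2(2) by simp
  have Wcov: "\<Union>W = topspace X"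
  proof
    show "\<Union>W \<subseteq> topspace X" unfolding W_def by auto
    show "topspace X \<subseteq> \<Union>W"
    proof
      fix x assume x: "x \<in> topspace X"
      obtain E1 where E1: "E1 \<in> V1" "x \<in> E1" using V1(3) x by blast
      have Tx: "(T ^^ m) x \<in> topspace X" by (rule funpow_top[where X=X and T=T, OF Tt x])
      obtain E2 where E2: "E2 \<in> V2" "(T ^^ m) x \<in> E2" using V2(3) Tx by blast
      have "topspace X \<inter> E1 \<inter> (T ^^ m) -` E2 \<in> W" unfolding W_def
        using E1(1) E2(1) by (intro image_eqI[of _ _ "(E1, E2)"]) auto
      moreover have "x \<in> topspace X \<inter> E1 \<inter> (T ^^ m) -` E2" using x E1 E2 by simp
      ultimately show "x \<in> \<Union>W" by blast
    qed
  qed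
  have "card W \<le> card (V1 \<times> V2)" unfolding W_def by (rule card_image_le) (simp add: V1(2) V2(2))
  then have "card W \<le> card V1 * card V2" by (simp add: card_cartesian_product)
  then show ?thesis using cn_le[OF Wsub Wfin Wcov] V1(4) V2(4) by simp
qed

lemma entropy_convergent:
  assumes Tt: "\<And>x. x \<in> topspace X \<Longrightarrow> T x \<in> topspace X" and ne: "topspace X \<noteq> {}"
    and ex: "\<And>n. \<exists>V. V \<subseteq> join_cover X T \<U> n \<and> finite V \<and> \<Union>V = topspace X"
  shows "convergent (\<lambda>n. ln (real (cover_num X (join_cover X T \<U> n))) / real n)"
proof (rule fekete)
  let ?N = "\<lambda>n. cover_num X (join_cover X T \<U> n)"
  have pos: "1 \<le> ?N n" for n by (rule cn_pos[OF ex ne])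
  show "0 \<le> ln (real (?N n))" for n using pos[of n] by simp
  fix m n
  have "real (?N (m + n)) \<le> real (?N m) * real (?N n)"
    using cn_submult[where X=X and T=T and \<U>=\<U>, OF Tt ex, of m n] by (metis of_nat_le_iff of_nat_mult)
  then have "ln (real (?N (m + n))) \<le> ln (real (?N m) * real (?N n))"
    using pos[of "m+n"] by simp
  also have "\<dots> = ln (real (?N m)) + ln (real (?N n))"
    using pos[of m] pos[of n] by (simp add: ln_mult)
  finally show "ln (real (?N (m + n))) \<le> ln (real (?N m)) + ln (real (?N n))" .
qed



definition win :: "('c \<Rightarrow> arith) \<Rightarrow> nat \<Rightarrow> nat \<times> 'c \<Rightarrow> complex" where
  "win \<phi> k x = \<phi> (snd x) (k + fst x)"

lemma spanning_evals:
  assumes anq: "anqie A" and \<phi>A: "\<And>c. c \<in> J \<Longrightarrow> \<phi> c \<in> A" and fin: "finite J" and r: "0 < r"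
    and bnd: "\<And>c m. c \<in> J \<Longrightarrow> cmod (\<phi> c m) \<le> R"
  shows "\<exists>S. finite S \<and> sep (win \<phi>) ({..<n} \<times> J) (r/2) S \<and>
     (\<forall>\<sigma>\<in>chars A. \<exists>s\<in>S. \<forall>t<n. \<forall>c\<in>J. cmod (\<sigma> ((shiftA ^^ t) (\<phi> c)) - \<phi> c (s + t)) < r)"
proof -
  have finI: "finite ({..<n} \<times> J)" using fin by simp
  have R: "\<And>k x. x \<in> {..<n} \<times> J \<Longrightarrow> cmod (win \<phi> k x) \<le> R"
    unfolding win_def using bnd by auto
  obtain S where S: "finite S" "sep (win \<phi>) ({..<n} \<times> J) (r/2) S"
     "\<forall>k. \<exists>s\<in>S. \<forall>x\<in>{..<n} \<times> J. cmod (win \<phi> k x - win \<phi> s x) < r/2"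
  proof -
    have "0 < r/2" using r by simp
    from sep_max[where w="win \<phi>" and R=R, OF finI this R] show ?thesis using that by blast
  qed
  have "\<exists>s\<in>S. \<forall>t<n. \<forall>c\<in>J. cmod (\<sigma> ((shiftA ^^ t) (\<phi> c)) - \<phi> c (s + t)) < r"
    if \<sigma>: "\<sigma> \<in> chars A" for \<sigma>
  proof -
    define h where "h x = (shiftA ^^ fst x) (\<phi> (snd x))" for x :: "nat \<times> _"
    have hA: "x \<in> {..<n} \<times> J \<Longrightarrow> h x \<in> A" for x unfolding h_def using \<phi>A A_shiftpow[OF anq] by auto
    obtain k where k: "\<forall>x\<in>{..<n} \<times> J. cmod (h x k - \<sigma> (h x)) < r/2"
      using char_density[where \<eta>="r/2" and h=h and I="{..<n} \<times> J", OF anq \<sigma> finI hA] r by auto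
    obtain s where s: "s \<in> S" "\<forall>x\<in>{..<n} \<times> J. cmod (win \<phi> k x - win \<phi> s x) < r/2" using S(3) by blast
    have "cmod (\<sigma> ((shiftA ^^ t) (\<phi> c)) - \<phi> c (s + t)) < r" if t: "t < n" and c: "c \<in> J" for t c
    proof -
      have x: "(t, c) \<in> {..<n} \<times> J" using t c by simp
      have 1: "cmod (\<phi> c (k + t) - \<sigma> ((shiftA ^^ t) (\<phi> c))) < r/2"
      proof -
        have "cmod (h (t, c) k - \<sigma> (h (t, c))) < r/2" using k x by blast
        then show ?thesis unfolding h_def by (simp add: shiftpow_apply)
      qed
      have 2: "cmod (\<phi> c (k + t) - \<phi> c (s + t)) < r/2" using s(2) x unfolding win_def by auto
      have "cmod (\<sigma> ((shiftA ^^ t) (\<phi> c)) - \<phi> c (s + t)) \<le>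
            cmod (\<phi> c (k + t) - \<sigma> ((shiftA ^^ t) (\<phi> c))) + cmod (\<phi> c (k + t) - \<phi> c (s + t))"
        using norm_triangle_ineq[of "\<sigma> ((shiftA ^^ t) (\<phi> c)) - \<phi> c (k + t)" "\<phi> c (k + t) - \<phi> c (s + t)"]
        by (simp add: norm_minus_commute)
      then show ?thesis using 1 2 by simp
    qed
    then show ?thesis using s(1) by blast
  qed
  then show ?thesis using S(1,2) by blast
qed

lemma topspace_mis: "topspace (max_ideal_space A) = chars A"
  unfolding max_ideal_space_def by simp

lemma Tt_mis: "anqie A \<Longrightarrow> x \<in> topspace (max_ideal_space A) \<Longrightarrow> dual_shift A x \<in> topspace (max_ideal_space A)"
  unfolding topspace_mis by (rule dual_shift_chars)

lemma ne_mis: "anqie A \<Longrightarrow> topspace (max_ideal_space A) \<noteq> {}"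
  unfolding topspace_mis using ev_chars by blast



lemma gen_bound:
  assumes fl: "\<And>i. f i \<in> linf" and finJ: "finite J" and c: "c \<in> J"
  shows "cmod ((shiftA ^^ snd c) (f (fst c)) m) \<le> (\<Sum>c\<in>J. supnorm (f (fst c)))"
proof -
  have "cmod ((shiftA ^^ snd c) (f (fst c)) m) \<le> supnorm (f (fst c))"
    unfolding shiftpow_apply by (rule supnorm_ge[OF fl])
  also have "\<dots> \<le> (\<Sum>c\<in>J. supnorm (f (fst c)))"
    using finJ c supnorm_nonneg[OF fl] by (intro member_le_sum) auto
  finally show ?thesis .
qed

lemma norm4: "cmod (p - q - r + u) \<le> cmod p + cmod q + cmod r + cmod u"
proof -
  have "cmod (p - q - r + u) \<le> cmod (p - q - r) + cmod u" by (rule norm_triangle_ineq)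
  moreover have "cmod (p - q - r) \<le> cmod (p - q) + cmod r" by (rule norm_triangle_ineq4)
  moreover have "cmod (p - q) \<le> cmod p + cmod q" by (rule norm_triangle_ineq4)
  ultimately show ?thesis by simp
qed

lemma main_compare:
  fixes f g :: "nat \<Rightarrow> arith" and \<U> :: "(arith \<Rightarrow> complex) set set"
  assumes fl: "\<And>i. f i \<in> linf" and gl: "\<And>i. g i \<in> linf"
    and U: "\<U> \<in> open_covers (max_ideal_space (anqie_gen (range f)))"
    and finJ: "finite J" and eta: "0 < \<eta>"
    and leb: "\<forall>\<rho>\<in>chars (anqie_gen (range f)). \<exists>V\<in>\<U>. \<forall>\<sigma>\<in>chars (anqie_gen (range f)).
               (\<forall>c\<in>J. cmod (\<sigma> ((shiftA ^^ snd c) (f (fst c))) - \<rho> ((shiftA ^^ snd c) (f (fst c)))) < \<eta>) \<longrightarrow> \<sigma> \<in> V"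
    and close: "\<And>i m. cmod (g i m - f i m) < \<eta> / 8"
  shows "\<exists>\<V>\<in>open_covers (max_ideal_space (anqie_gen (range g))).
           cover_entropy (max_ideal_space (anqie_gen (range f))) (dual_shift (anqie_gen (range f))) \<U>
         \<le> cover_entropy (max_ideal_space (anqie_gen (range g))) (dual_shift (anqie_gen (range g))) \<V>"
proof -
  define A where "A = anqie_gen (range f)"
  define B where "B = anqie_gen (range g)"
  define XA where "XA = max_ideal_space A"
  define XB where "XB = max_ideal_space B"
  define TA where "TA = dual_shift A"
  define TB where "TB = dual_shift B"
  define \<phi>f where "\<phi>f c = (shiftA ^^ snd c) (f (fst c))" for c :: "nat \<times> nat"
  define \<phi>g where "\<phi>g c = (shiftA ^^ snd c) (g (fst c))" for c :: "nat \<times> nat"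
  define \<theta> where "\<theta> = \<eta> / 8"
  have \<theta>: "0 < \<theta>" unfolding \<theta>_def using eta by simp
  have anqA: "anqie A" unfolding A_def using fl by (intro anqie_gen_anqie) auto
  have anqB: "anqie B" unfolding B_def using gl by (intro anqie_gen_anqie) auto
  have \<phi>fA: "\<phi>f c \<in> A" for c
    unfolding \<phi>f_def A_def using anqie_gen_sub[of "range f"] A_shiftpow[OF anqA[unfolded A_def]] by auto
  have \<phi>gB: "\<phi>g c \<in> B" for c
    unfolding \<phi>g_def B_def using anqie_gen_sub[of "range g"] A_shiftpow[OF anqB[unfolded B_def]] by auto
  have bf: "\<And>c m. c \<in> J \<Longrightarrow> cmod (\<phi>f c m) \<le> (\<Sum>c\<in>J. supnorm (f (fst c)))"
    unfolding \<phi>f_def using gen_bound[where f=f, OF fl finJ] by blast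
  have bg: "\<And>c m. c \<in> J \<Longrightarrow> cmod (\<phi>g c m) \<le> (\<Sum>c\<in>J. supnorm (g (fst c)))"
    unfolding \<phi>g_def using gen_bound[where f=g, OF gl finJ] by blast
  have cl: "cmod (\<phi>g c m - \<phi>f c m) < \<theta>" for c m
    unfolding \<phi>g_def \<phi>f_def \<theta>_def shiftpow_apply using close by blast
  have topA: "topspace XA = chars A" unfolding XA_def by (rule topspace_mis)
  have topB: "topspace XB = chars B" unfolding XB_def by (rule topspace_mis)
  note leb = leb[folded A_def, folded \<phi>f_def]
  define Vz where "Vz z = {\<sigma> \<in> chars B. \<forall>c\<in>J. cmod (\<sigma> (\<phi>g c) - z c) < \<theta>}" for z
  define VV where "VV = range Vz"
  have VVo: "VV \<in> open_covers XB"
    unfolding open_covers_def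
  proof (intro CollectI conjI ballI)
    fix V assume "V \<in> VV"
    then obtain z where z: "V = Vz z" unfolding VV_def by auto
    define T0 where "T0 = {\<tau>::arith \<Rightarrow> complex. \<forall>c\<in>J. cmod (\<tau> (\<phi>g c) - z c) < \<theta>}"
    have "open T0"
      unfolding T0_def by (rule open_coord_box[where J=J and \<phi>=\<phi>g and z=z and r="\<lambda>_. \<theta>", OF finJ])
    then have o: "openin euclidean T0" by simp
    have e: "V = T0 \<inter> chars B" unfolding z Vz_def T0_def by (simp add: Collect_conj_eq Int_commute)
    show "openin XB V" unfolding XB_def max_ideal_space_def openin_subtopology
      using o e by blast
  next
    show "\<Union>VV = topspace XB"
    proof
      show "\<Union>VV \<subseteq> topspace XB" unfolding topB VV_def Vz_def by auto
      show "topspace XB \<subseteq> \<Union>VV"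
      proof
        fix \<sigma> assume "\<sigma> \<in> topspace XB"
        then have "\<sigma> \<in> Vz (\<lambda>c. \<sigma> (\<phi>g c))" unfolding topB Vz_def using \<theta> by auto
        then show "\<sigma> \<in> \<Union>VV" unfolding VV_def by blast
      qed
    qed
  qed
  have step: "(\<exists>W. W \<subseteq> join_cover XA TA \<U> n \<and> finite W \<and> \<Union>W = topspace XA) \<and>
              (\<exists>W. W \<subseteq> join_cover XB TB VV n \<and> finite W \<and> \<Union>W = topspace XB) \<and>
              cover_num XA (join_cover XA TA \<U> n) \<le> cover_num XB (join_cover XB TB VV n)" for n
  proof -
    obtain S where S: "finite S" "sep (win \<phi>f) ({..<n} \<times> J) (\<eta>/2) S"
      "\<forall>\<sigma>\<in>chars A. \<exists>s\<in>S. \<forall>t<n. \<forall>c\<in>J. cmod (\<sigma> ((shiftA ^^ t) (\<phi>f c)) - \<phi>f c (s + t)) < \<eta>"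
      using spanning_evals[where \<phi>=\<phi>f and R="\<Sum>c\<in>J. supnorm (f (fst c))", OF anqA \<phi>fA finJ eta bf] by blast
    define \<rho>t where "\<rho>t s t = (TA ^^ t) (ev A s)" for s t
    have \<rho>tA: "\<rho>t s t \<in> chars A" for s t
      unfolding \<rho>t_def TA_def by (rule dual_shift_pow_chars[OF anqA ev_chars[OF anqA]])
    define P where "P s t V \<longleftrightarrow> V \<in> \<U> \<and> (\<forall>\<sigma>\<in>chars A. (\<forall>c\<in>J. cmod (\<sigma> (\<phi>f c) - \<rho>t s t (\<phi>f c)) < \<eta>) \<longrightarrow> \<sigma> \<in> V)" for s t V
    define Uf where "Uf s t = (SOME V. P s t V)" for s t
    have UfP: "P s t (Uf s t)" for s t
    proof -
      from bspec[OF leb \<rho>tA[of s t]] obtain V where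
        "V \<in> \<U>" "\<forall>\<sigma>\<in>chars A. (\<forall>c\<in>J. cmod (\<sigma> (\<phi>f c) - \<rho>t s t (\<phi>f c)) < \<eta>) \<longrightarrow> \<sigma> \<in> V"
        by blast
      then have "P s t V" unfolding P_def by blast
      then show ?thesis unfolding Uf_def by (rule someI)
    qed
    define E where "E s = topspace XA \<inter> (\<Inter>t<n. (TA ^^ t) -` Uf s t)" for s
    have Ej: "E s \<in> join_cover XA TA \<U> n" for s
      unfolding E_def join_cover_def using UfP unfolding P_def by blast
    have Ecov: "\<Union>(E ` S) = topspace XA"
    proof
      show "\<Union>(E ` S) \<subseteq> topspace XA" unfolding E_def by auto
      show "topspace XA \<subseteq> \<Union>(E ` S)"
      proof
        fix \<sigma> assume \<sigma>: "\<sigma> \<in> topspace XA"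
        then have \<sigma>A: "\<sigma> \<in> chars A" using topA by simp
        obtain s where s: "s \<in> S" "\<forall>t<n. \<forall>c\<in>J. cmod (\<sigma> ((shiftA ^^ t) (\<phi>f c)) - \<phi>f c (s + t)) < \<eta>"
          using S(3) \<sigma>A by blast
        have "(TA ^^ t) \<sigma> \<in> Uf s t" if t: "t < n" for t
        proof -
          have inA: "(TA ^^ t) \<sigma> \<in> chars A" unfolding TA_def by (rule dual_shift_pow_chars[OF anqA \<sigma>A])
          have "cmod ((TA ^^ t) \<sigma> (\<phi>f c) - \<rho>t s t (\<phi>f c)) < \<eta>" if c: "c \<in> J" for c
          proof -
            have "(TA ^^ t) \<sigma> (\<phi>f c) = \<sigma> ((shiftA ^^ t) (\<phi>f c))"
              unfolding TA_def by (rule dual_shift_pow[OF anqA \<phi>fA])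
            moreover have "\<rho>t s t (\<phi>f c) = \<phi>f c (s + t)"
              unfolding \<rho>t_def TA_def by (rule dual_shift_pow_ev[OF anqA \<phi>fA])
            ultimately show ?thesis using s(2) t c by simp
          qed
          then show ?thesis using UfP[of s t] inA unfolding P_def by blast
        qed
        then have "\<sigma> \<in> E s" unfolding E_def using \<sigma> by auto
        then show "\<sigma> \<in> \<Union>(E ` S)" using s(1) by blast
      qed
    qed
    have exA: "\<exists>W. W \<subseteq> join_cover XA TA \<U> n \<and> finite W \<and> \<Union>W = topspace XA"
      using Ej Ecov S(1) by (intro exI[of _ "E ` S"]) auto
    have upA: "cover_num XA (join_cover XA TA \<U> n) \<le> card S"
    proof -
      have "cover_num XA (join_cover XA TA \<U> n) \<le> card (E ` S)"
        using Ej Ecov S(1) by (intro cn_le) auto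
      also have "\<dots> \<le> card S" using S(1) by (rule card_image_le)
      finally show ?thesis .
    qed
    obtain K where K: "finite K"
      "\<forall>\<sigma>\<in>chars B. \<exists>k\<in>K. \<forall>t<n. \<forall>c\<in>J. cmod (\<sigma> ((shiftA ^^ t) (\<phi>g c)) - \<phi>g c (k + t)) < \<theta>"
      using spanning_evals[where \<phi>=\<phi>g and R="\<Sum>c\<in>J. supnorm (g (fst c))", OF anqB \<phi>gB finJ \<theta> bg] by blast
    define E' where "E' k = topspace XB \<inter> (\<Inter>t<n. (TB ^^ t) -` Vz (\<lambda>c. \<phi>g c (k + t)))" for k
    have E'j: "E' k \<in> join_cover XB TB VV n" for k
      unfolding E'_def join_cover_def
      by (intro CollectI exI[of _ "\<lambda>t. Vz (\<lambda>c. \<phi>g c (k + t))"]) (simp add: VV_def)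
    have E'cov: "\<Union>(E' ` K) = topspace XB"
    proof
      show "\<Union>(E' ` K) \<subseteq> topspace XB" unfolding E'_def by auto
      show "topspace XB \<subseteq> \<Union>(E' ` K)"
      proof
        fix \<sigma> assume \<sigma>: "\<sigma> \<in> topspace XB"
        then have \<sigma>B: "\<sigma> \<in> chars B" using topB by simp
        obtain k where k: "k \<in> K" "\<forall>t<n. \<forall>c\<in>J. cmod (\<sigma> ((shiftA ^^ t) (\<phi>g c)) - \<phi>g c (k + t)) < \<theta>"
          using K(2) \<sigma>B by blast
        have "(TB ^^ t) \<sigma> \<in> Vz (\<lambda>c. \<phi>g c (k + t))" if t: "t < n" for t
        proof -
          have inB: "(TB ^^ t) \<sigma> \<in> chars B" unfolding TB_def by (rule dual_shift_pow_chars[OF anqB \<sigma>B])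
          have "(TB ^^ t) \<sigma> (\<phi>g c) = \<sigma> ((shiftA ^^ t) (\<phi>g c))" for c
            unfolding TB_def by (rule dual_shift_pow[OF anqB \<phi>gB])
          then show ?thesis unfolding Vz_def using inB k(2) t by auto
        qed
        then have "\<sigma> \<in> E' k" unfolding E'_def using \<sigma> by auto
        then show "\<sigma> \<in> \<Union>(E' ` K)" using k(1) by blast
      qed
    qed
    have exB: "\<exists>W. W \<subseteq> join_cover XB TB VV n \<and> finite W \<and> \<Union>W = topspace XB"
      using E'j E'cov K(1) by (intro exI[of _ "E' ` K"]) auto
    have lowB: "card S \<le> cover_num XB (join_cover XB TB VV n)"
    proof (rule cn_ge[OF exB])
      fix W assume W: "W \<subseteq> join_cover XB TB VV n" "finite W" "\<Union>W = topspace XB"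
      define pick where "pick s = (SOME E. E \<in> W \<and> ev B s \<in> E)" for s
      have pickW: "pick s \<in> W \<and> ev B s \<in> pick s" for s
      proof -
        have "ev B s \<in> topspace XB" using topB ev_chars[OF anqB] by simp
        then have "\<exists>E. E \<in> W \<and> ev B s \<in> E" using W(3) by blast
        then show ?thesis unfolding pick_def by (rule someI_ex)
      qed
      have memE: "\<forall>t<n. \<forall>c\<in>J. cmod (\<phi>g c (s + t) - z t c) < \<theta>"
        if E: "E = topspace XB \<inter> (\<Inter>t<n. (TB ^^ t) -` Vz (z t))" and sE: "ev B s \<in> E" for E s z
      proof (intro allI impI ballI)
        fix t c assume t: "t < n" and c: "c \<in> J"
        have "(TB ^^ t) (ev B s) \<in> Vz (z t)" using sE E t by auto
        then have "cmod ((TB ^^ t) (ev B s) (\<phi>g c) - z t c) < \<theta>" unfolding Vz_def using c by auto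
        moreover have "(TB ^^ t) (ev B s) (\<phi>g c) = \<phi>g c (s + t)"
          unfolding TB_def by (rule dual_shift_pow_ev[OF anqB \<phi>gB])
        ultimately show "cmod (\<phi>g c (s + t) - z t c) < \<theta>" by simp
      qed
      have inj: "inj_on pick S"
      proof
        fix s s' assume s: "s \<in> S" and s': "s' \<in> S" and eq: "pick s = pick s'"
        show "s = s'"
        proof (rule ccontr)
          assume ne: "s \<noteq> s'"
          obtain x where x: "x \<in> {..<n} \<times> J" "\<eta>/2 \<le> cmod (win \<phi>f s x - win \<phi>f s' x)"
            using S(2) s s' ne unfolding sep_def by blast
          obtain t c where tc: "x = (t, c)" "t < n" "c \<in> J" using x(1) by auto
          have "pick s \<in> join_cover XB TB VV n" using pickW W(1) by blast
          then obtain Uf where Uf: "\<forall>t<n. Uf t \<in> VV" "pick s = topspace XB \<inter> (\<Inter>t<n. (TB ^^ t) -` Uf t)"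
            unfolding join_cover_def by blast
          have "\<forall>t. \<exists>z. t < n \<longrightarrow> Uf t = Vz z" using Uf(1) unfolding VV_def by blast
          then obtain z where z: "\<And>t. t < n \<Longrightarrow> Uf t = Vz (z t)" by metis
          have pe: "pick s = topspace XB \<inter> (\<Inter>t<n. (TB ^^ t) -` Vz (z t))" using Uf(2) z by auto
          have 1: "cmod (\<phi>g c (s + t) - z t c) < \<theta>"
            using memE[OF pe, of s] pickW[of s] tc by blast
          have 2: "cmod (\<phi>g c (s' + t) - z t c) < \<theta>"
            using memE[of "pick s" z s'] pe eq pickW[of s'] tc by metis
          have 3: "cmod (\<phi>g c (s + t) - \<phi>f c (s + t)) < \<theta>" by (rule cl)
          have 4: "cmod (\<phi>g c (s' + t) - \<phi>f c (s' + t)) < \<theta>" by (rule cl)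
          have "cmod (\<phi>f c (s + t) - \<phi>f c (s' + t)) \<le>
                cmod (\<phi>g c (s + t) - \<phi>f c (s + t)) + cmod (\<phi>g c (s + t) - z t c)
                + cmod (\<phi>g c (s' + t) - z t c) + cmod (\<phi>g c (s' + t) - \<phi>f c (s' + t))"
          proof -
            have "\<phi>f c (s + t) - \<phi>f c (s' + t) = (\<phi>g c (s + t) - z t c) - (\<phi>g c (s + t) - \<phi>f c (s + t))
                   - (\<phi>g c (s' + t) - z t c) + (\<phi>g c (s' + t) - \<phi>f c (s' + t))" by simp
            then have "cmod (\<phi>f c (s + t) - \<phi>f c (s' + t)) = cmod ((\<phi>g c (s + t) - z t c) - (\<phi>g c (s + t) - \<phi>f c (s + t))
                   - (\<phi>g c (s' + t) - z t c) + (\<phi>g c (s' + t) - \<phi>f c (s' + t)))" by simp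
            also have "\<dots> \<le> cmod (\<phi>g c (s + t) - z t c) + cmod (\<phi>g c (s + t) - \<phi>f c (s + t))
                   + cmod (\<phi>g c (s' + t) - z t c) + cmod (\<phi>g c (s' + t) - \<phi>f c (s' + t))" by (rule norm4)
            finally show ?thesis by simp
          qed
          moreover have "cmod (win \<phi>f s x - win \<phi>f s' x) = cmod (\<phi>f c (s + t) - \<phi>f c (s' + t))"
            unfolding tc win_def by (simp add: add.commute)
          ultimately show False using x(2) 1 2 3 4 unfolding \<theta>_def by simp
        qed
      qed
      have "pick ` S \<subseteq> W" using pickW by blast
      then show "card S \<le> card W" using card_inj_on_le[OF inj _ W(2)] by blast
    qed
    show ?thesis using exA exB upA lowB by simp
  qed
  let ?NU = "\<lambda>n. cover_num XA (join_cover XA TA \<U> n)"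
  let ?NV = "\<lambda>n. cover_num XB (join_cover XB TB VV n)"
  have TtA: "\<And>x. x \<in> topspace XA \<Longrightarrow> TA x \<in> topspace XA" unfolding XA_def TA_def using Tt_mis[OF anqA] by blast
  have TtB: "\<And>x. x \<in> topspace XB \<Longrightarrow> TB x \<in> topspace XB" unfolding XB_def TB_def using Tt_mis[OF anqB] by blast
  have neA: "topspace XA \<noteq> {}" unfolding XA_def by (rule ne_mis[OF anqA])
  have neB: "topspace XB \<noteq> {}" unfolding XB_def by (rule ne_mis[OF anqB])
  have exAll: "\<exists>W. W \<subseteq> join_cover XA TA \<U> n \<and> finite W \<and> \<Union>W = topspace XA" for n
    using step[of n] by (rule conjunct1)
  have exBll: "\<exists>W. W \<subseteq> join_cover XB TB VV n \<and> finite W \<and> \<Union>W = topspace XB" for n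
    using step[of n] by blast
  have NUV: "cover_num XA (join_cover XA TA \<U> n) \<le> cover_num XB (join_cover XB TB VV n)" for n
    using step[of n] by blast
  have cA: "convergent (\<lambda>n. ln (real (?NU n)) / real n)"
    by (rule entropy_convergent[where X=XA and T=TA, OF TtA neA exAll])
  have cB: "convergent (\<lambda>n. ln (real (?NV n)) / real n)"
    by (rule entropy_convergent[where X=XB and T=TB, OF TtB neB exBll])
  have le: "ln (real (?NU n)) / real n \<le> ln (real (?NV n)) / real n" for n
  proof -
    have p: "1 \<le> ?NU n" by (rule cn_pos[where X=XA, OF exAll neA])
    have "ln (real (?NU n)) \<le> ln (real (?NV n))" using p NUV[of n] by simp
    then show ?thesis by (simp add: divide_right_mono)
  qed
  have "lim (\<lambda>n. ln (real (?NU n)) / real n) \<le> lim (\<lambda>n. ln (real (?NV n)) / real n)"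
    using LIMSEQ_le[OF cA[unfolded convergent_LIMSEQ_iff] cB[unfolded convergent_LIMSEQ_iff]] le by blast
  then have "cover_entropy XA TA \<U> \<le> cover_entropy XB TB VV" unfolding cover_entropy_def .
  then show ?thesis using VVo unfolding XA_def XB_def TA_def TB_def A_def B_def by blast
qed



theorem theorem1p4:
  fixes f :: "nat \<Rightarrow> arith"
  assumes "\<forall>i. f i \<in> linf"
    and "anqie_entropy (range f) < \<infinity>"
  shows "\<forall>\<epsilon>>0. \<exists>\<delta>>0. \<forall>g :: nat \<Rightarrow> arith.
           (\<forall>i. g i \<in> linf) \<and> (SUP i. ereal (supnorm (\<lambda>n. g i n - f i n))) < ereal \<delta>
           \<longrightarrow> anqie_entropy (range g) > anqie_entropy (range f) - ereal \<epsilon>"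
proof (intro allI impI)
  fix \<epsilon> :: real assume \<epsilon>: "\<epsilon> > 0"
  have fl: "\<And>i. f i \<in> linf" using assms(1) by blast
  define A where "A = anqie_gen (range f)"
  define XA where "XA = max_ideal_space A"
  define TA where "TA = dual_shift A"
  have anqA: "anqie A" unfolding A_def using fl by (intro anqie_gen_anqie) auto
  define h where "h = anqie_entropy (range f)"
  have hS: "h = (SUP U\<in>open_covers XA. ereal (cover_entropy XA TA U))"
    unfolding h_def anqie_entropy_def top_entropy_def XA_def TA_def A_def ..
  have topA: "topspace XA = chars A" unfolding XA_def by (rule topspace_mis)
  have triv: "{topspace XA} \<in> open_covers XA" unfolding open_covers_def by auto
  have "ereal (cover_entropy XA TA {topspace XA}) \<le> h" unfolding hS using triv by (rule SUP_upper)
  then have hm: "h \<noteq> -\<infinity>" by auto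
  have hp: "h \<noteq> \<infinity>" using assms(2) unfolding h_def by simp
  obtain r0 where r0: "h = ereal r0" using hm hp by (cases h) auto
  have "h - ereal \<epsilon> < h" using r0 \<epsilon> by simp
  then obtain \<U> where U: "\<U> \<in> open_covers XA" "h - ereal \<epsilon> < ereal (cover_entropy XA TA \<U>)"
    unfolding hS less_SUP_iff by blast
  define \<phi> where "\<phi> c = (shiftA ^^ snd c) (f (fst c))" for c :: "nat \<times> nat"
  have inj: "\<rho> = \<sigma>" if "\<rho> \<in> chars A" "\<sigma> \<in> chars A" "\<And>c. \<rho> (\<phi> c) = \<sigma> (\<phi> c)" for \<rho> \<sigma>
  proof (rule chars_gen_unique[where f=f, OF fl])
    show "\<rho> \<in> chars (anqie_gen (range f))" "\<sigma> \<in> chars (anqie_gen (range f))" using that(1,2) A_def by auto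
    show "\<rho> ((shiftA ^^ s) (f i)) = \<sigma> ((shiftA ^^ s) (f i))" for i s
      using that(3)[of "(i, s)"] unfolding \<phi>_def by simp
  qed
  have Uo: "openin (subtopology euclidean (chars A)) V" if "V \<in> \<U>" for V
    using U(1) that unfolding open_covers_def XA_def max_ideal_space_def by blast
  have Uc: "chars A \<subseteq> \<Union>\<U>" using U(1) topA unfolding open_covers_def by blast
  obtain J \<eta> where J: "finite J" "0 < \<eta>"
    "\<forall>\<rho>\<in>chars A. \<exists>V\<in>\<U>. \<forall>\<sigma>\<in>chars A. (\<forall>c\<in>J. cmod (\<sigma> (\<phi> c) - \<rho> (\<phi> c)) < \<eta>) \<longrightarrow> \<sigma> \<in> V"
    using lebesgue_box[where X="chars A" and \<phi>=\<phi> and \<U>=\<U>, OF chars_compact[OF anqA] inj Uo Uc] by blast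
  show "\<exists>\<delta>>0. \<forall>g :: nat \<Rightarrow> arith.
           (\<forall>i. g i \<in> linf) \<and> (SUP i. ereal (supnorm (\<lambda>n. g i n - f i n))) < ereal \<delta>
           \<longrightarrow> anqie_entropy (range g) > anqie_entropy (range f) - ereal \<epsilon>"
  proof (intro exI[of _ "\<eta> / 8"] conjI allI impI)
    show "0 < \<eta> / 8" using J(2) by simp
    fix g :: "nat \<Rightarrow> arith"
    assume H: "(\<forall>i. g i \<in> linf) \<and> (SUP i. ereal (supnorm (\<lambda>n. g i n - f i n))) < ereal (\<eta> / 8)"
    have gl: "\<And>i. g i \<in> linf" using H by blast
    have close: "cmod (g i m - f i m) < \<eta> / 8" for i m
    proof -
      have "cmod (g i m - f i m) \<le> supnorm (\<lambda>n. g i n - f i n)"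
        by (rule supnorm_ge[OF linf_diff[OF gl fl]])
      moreover have "ereal (supnorm (\<lambda>n. g i n - f i n)) \<le> (SUP i. ereal (supnorm (\<lambda>n. g i n - f i n)))"
        by (rule SUP_upper) simp
      then have "ereal (supnorm (\<lambda>n. g i n - f i n)) < ereal (\<eta> / 8)" using H by (meson order_le_less_trans)
      ultimately show ?thesis by simp
    qed
    have leb: "\<forall>\<rho>\<in>chars (anqie_gen (range f)). \<exists>V\<in>\<U>. \<forall>\<sigma>\<in>chars (anqie_gen (range f)).
               (\<forall>c\<in>J. cmod (\<sigma> ((shiftA ^^ snd c) (f (fst c))) - \<rho> ((shiftA ^^ snd c) (f (fst c)))) < \<eta>) \<longrightarrow> \<sigma> \<in> V"
      using J(3) unfolding A_def \<phi>_def .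
    obtain \<V> where V: "\<V> \<in> open_covers (max_ideal_space (anqie_gen (range g)))"
      "cover_entropy XA TA \<U> \<le> cover_entropy (max_ideal_space (anqie_gen (range g))) (dual_shift (anqie_gen (range g))) \<V>"
      using main_compare[where f=f and g=g and \<U>=\<U>, OF fl gl U(1)[unfolded XA_def A_def] J(1,2) leb close]
      unfolding XA_def TA_def A_def by blast
    have "ereal (cover_entropy (max_ideal_space (anqie_gen (range g))) (dual_shift (anqie_gen (range g))) \<V>)
          \<le> anqie_entropy (range g)"
      unfolding anqie_entropy_def top_entropy_def using V(1) by (rule SUP_upper)
    moreover have "h - ereal \<epsilon> < ereal (cover_entropy (max_ideal_space (anqie_gen (range g))) (dual_shift (anqie_gen (range g))) \<V>)"
      using U(2) V(2) by (meson ereal_less_eq(3) order_less_le_trans)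
    ultimately show "anqie_entropy (range g) > anqie_entropy (range f) - ereal \<epsilon>"
      unfolding h_def by simp
  qed
qed


end
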